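(* Let $(\mathcal G,c)$ be a finite connected weighted planar graph and $W\subset\mathcal V\mathcal G$ nonempty. For $x\in\mathcal V\mathcal G$ let $X^x$ be the random walk on $(\mathcal G,c)$ started at $x$ and $\tau_x$ its first hitting time of $W$. Then for all $x,y\in\mathcal V\mathcal G\setminus W$, $$d_{TV}\big(X^x_{\tau_x},X^y_{\tau_y}\big)\le\mathbb P\big(X^x|_{[0,\tau_x]}\text{ does not disconnect }y\text{ from }W\big),$$ where $d_{TV}$ is total variation distance between the laws, and "$X^x|_{[0,\tau_x]}$ disconnects $y$ from $W$" means that every path in $\mathcal G$ from $y$ to $W$ visits some vertex in $\{X^x_0,\dots,X^x_{\tau_x}\}$.
   Context: The random walk on a weighted graph $(\mathcal G,c)$ with positive conductances moves from $x$ to $y$ with probability $c_{xy}/\pi(x)$, where $c_{xy}$ is the total conductance of edges joining $x$ and $y$ and $\pi(x)=\sum_{e\ni x}c_e$. *)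

theory Defs
  imports "HOL-Analysis.Analysis"
begin

text \<open>A finite weighted graph on vertex set V is encoded by the symmetric function
  c x y = total conductance of the edges joining x and y (0 if there is none;
  c x x is the total conductance of loops at x).\<close>

definition weighted_graph :: "'a set \<Rightarrow> ('a \<Rightarrow> 'a \<Rightarrow> real) \<Rightarrow> bool" where
  "weighted_graph V c \<longleftrightarrow> finite V \<and>
     (\<forall>x y. c x y = c y x) \<and> (\<forall>x y. 0 \<le> c x y) \<and>
     (\<forall>x y. c x y \<noteq> 0 \<longrightarrow> x \<in> V \<and> y \<in> V)"

definition adj :: "('a \<Rightarrow> 'a \<Rightarrow> real) \<Rightarrow> 'a \<Rightarrow> 'a \<Rightarrow> bool" where
  "adj c x y \<longleftrightarrow> 0 < c x y"

definition graph_path :: "('a \<Rightarrow> 'a \<Rightarrow> real) \<Rightarrow> 'a list \<Rightarrow> bool" where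
  "graph_path c q \<longleftrightarrow> q \<noteq> [] \<and> (\<forall>i. Suc i < length q \<longrightarrow> adj c (q ! i) (q ! Suc i))"

definition connected_graph :: "'a set \<Rightarrow> ('a \<Rightarrow> 'a \<Rightarrow> real) \<Rightarrow> bool" where
  "connected_graph V c \<longleftrightarrow>
     (\<forall>u\<in>V. \<forall>v\<in>V. \<exists>q. graph_path c q \<and> hd q = u \<and> last q = v)"

text \<open>Planarity: an embedding of the underlying simple graph (loops ignored) in the plane
  \<open>\<complex> = \<real>\<^sup>2\<close>: distinct points for vertices, an arc for each edge \<open>{u,v}\<close> (u \<noteq> v) joining
  the images of its endpoints, passing through no other vertex, and two distinct edges meet
  only in images of common endpoints.\<close>
definition planar_graph :: "'a set \<Rightarrow> ('a \<Rightarrow> 'a \<Rightarrow> real) \<Rightarrow> bool" where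
  "planar_graph V c \<longleftrightarrow>
    (\<exists>(f :: 'a \<Rightarrow> complex) (g :: 'a set \<Rightarrow> real \<Rightarrow> complex).
       inj_on f V \<and>
       (\<forall>u v. u \<noteq> v \<and> adj c u v \<longrightarrow>
          arc (g {u, v}) \<and> {pathstart (g {u, v}), pathfinish (g {u, v})} = {f u, f v} \<and>
          path_image (g {u, v}) \<inter> f ` V = {f u, f v}) \<and>
       (\<forall>u v u' v'. u \<noteq> v \<and> adj c u v \<and> u' \<noteq> v' \<and> adj c u' v' \<and> {u, v} \<noteq> {u', v'} \<longrightarrow>
          path_image (g {u, v}) \<inter> path_image (g {u', v'}) \<subseteq> f ` ({u, v} \<inter> {u', v'})))"

definition stat :: "'a set \<Rightarrow> ('a \<Rightarrow> 'a \<Rightarrow> real) \<Rightarrow> 'a \<Rightarrow> real" where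
  "stat V c x = (\<Sum>y\<in>V. c x y)"

definition trans_prob :: "'a set \<Rightarrow> ('a \<Rightarrow> 'a \<Rightarrow> real) \<Rightarrow> 'a \<Rightarrow> 'a \<Rightarrow> real" where
  "trans_prob V c x y = c x y / stat V c x"

definition traj_prob :: "'a set \<Rightarrow> ('a \<Rightarrow> 'a \<Rightarrow> real) \<Rightarrow> 'a list \<Rightarrow> real" where
  "traj_prob V c p = (\<Prod>i<length p - 1. trans_prob V c (p ! i) (p ! Suc i))"

text \<open>Possible trajectories \<open>X\<^sup>x|_[0,\<tau>_x]\<close> of the walk from x stopped at its hitting time of W:
  start at x, end in W, no earlier visit to W.\<close>
definition stopped_trajs :: "'a set \<Rightarrow> 'a \<Rightarrow> 'a list set" where
  "stopped_trajs W x = {p. p \<noteq> [] \<and> hd p = x \<and> last p \<in> W \<and>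
                          (\<forall>i. Suc i < length p \<longrightarrow> p ! i \<notin> W)}"

text \<open>Law of the hitting position \<open>X\<^sup>x_{\<tau>_x}\<close>: probability that it lies in A.\<close>
definition hit_law :: "'a set \<Rightarrow> ('a \<Rightarrow> 'a \<Rightarrow> real) \<Rightarrow> 'a set \<Rightarrow> 'a \<Rightarrow> 'a set \<Rightarrow> real" where
  "hit_law V c W x A = (\<Sum>\<^sub>\<infinity>p \<in> {p \<in> stopped_trajs W x. last p \<in> A}. traj_prob V c p)"

definition dTV_hit :: "'a set \<Rightarrow> ('a \<Rightarrow> 'a \<Rightarrow> real) \<Rightarrow> 'a set \<Rightarrow> 'a \<Rightarrow> 'a \<Rightarrow> real" where
  "dTV_hit V c W x y = (SUP A\<in>Pow V. \<bar>hit_law V c W x A - hit_law V c W y A\<bar>)"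

definition disconnects :: "('a \<Rightarrow> 'a \<Rightarrow> real) \<Rightarrow> 'a set \<Rightarrow> 'a \<Rightarrow> 'a set \<Rightarrow> bool" where
  "disconnects c S y W \<longleftrightarrow>
     (\<forall>q. graph_path c q \<and> hd q = y \<and> last q \<in> W \<longrightarrow> set q \<inter> S \<noteq> {})"

definition prob_not_disconnect :: "'a set \<Rightarrow> ('a \<Rightarrow> 'a \<Rightarrow> real) \<Rightarrow> 'a set \<Rightarrow> 'a \<Rightarrow> 'a \<Rightarrow> real" where
  "prob_not_disconnect V c W x y =
     (\<Sum>\<^sub>\<infinity>p \<in> {p \<in> stopped_trajs W x. \<not> disconnects c (set p) y W}. traj_prob V c p)"

end

theory Submission
  imports Defs "HOL-Library.Multiset"
begin

lemma ennsum[simp]: "(f::'b \<Rightarrow> ennreal) summable_on A"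
  by (rule nonneg_summable_on_complete) simp

lemma ennreal_infsum_cmult_left:
  fixes f :: "'b \<Rightarrow> ennreal"
  shows "infsum (\<lambda>x. k * f x) A = k * infsum f A"
proof -
  have "infsum (\<lambda>x. k * f x) A = (SUP F\<in>{F. finite F \<and> F \<subseteq> A}. sum (\<lambda>x. k * f x) F)"
    by (rule nonneg_infsum_complete) simp
  also have "\<dots> = (SUP F\<in>{F. finite F \<and> F \<subseteq> A}. k * sum f F)"
    by (simp add: sum_distrib_left)
  also have "\<dots> = k * (SUP F\<in>{F. finite F \<and> F \<subseteq> A}. sum f F)"
    by (simp add: SUP_mult_left_ennreal)
  also have "(SUP F\<in>{F. finite F \<and> F \<subseteq> A}. sum f F) = infsum f A"
    by (rule nonneg_infsum_complete[symmetric]) simp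
  finally show ?thesis .
qed

lemma ennreal_infsum_cmult_right:
  fixes f :: "'b \<Rightarrow> ennreal"
  shows "infsum (\<lambda>x. f x * k) A = infsum f A * k"
  using ennreal_infsum_cmult_left[of k f A] by (simp add: mult.commute)

lemma ennreal_infsum_mono_set:
  fixes f :: "'b \<Rightarrow> ennreal"
  assumes "A \<subseteq> B" shows "infsum f A \<le> infsum f B"
  by (rule infsum_mono_neutral) (use assms in \<open>auto\<close>)

lemma ennreal_infsum_mono:
  fixes f g :: "'b \<Rightarrow> ennreal"
  assumes "\<And>x. x \<in> A \<Longrightarrow> f x \<le> g x" shows "infsum f A \<le> infsum g A"
  by (rule infsum_mono) (use assms in \<open>auto\<close>)

lemma ennreal_infsum_add:
  fixes f g :: "'b \<Rightarrow> ennreal"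
  shows "infsum (\<lambda>x. f x + g x) A = infsum f A + infsum g A"
  by (rule infsum_add) auto

lemma ennreal_infsum_Sigma_finite:
  fixes f :: "'b \<times> 'c \<Rightarrow> ennreal"
  assumes "finite A"
  shows "infsum f (Sigma A B) = (\<Sum>a\<in>A. infsum (\<lambda>b. f (a, b)) (B a))"
  using assms
proof (induction A rule: finite_induct)
  case empty then show ?case by simp
next
  case (insert a A)
  have eq: "Sigma (insert a A) B = Pair a ` B a \<union> Sigma A B" by auto
  have disj: "Pair a ` B a \<inter> Sigma A B = {}" using insert by auto
  have "infsum f (Sigma (insert a A) B) = infsum f (Pair a ` B a) + infsum f (Sigma A B)"
    unfolding eq by (rule infsum_Un_disjoint) (use disj in auto)
  also have "infsum f (Pair a ` B a) = infsum (\<lambda>b. f (a, b)) (B a)"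
    by (subst infsum_reindex) (auto simp: inj_on_def o_def)
  finally show ?case using insert by simp
qed

lemma ennreal_infsum_Sigma:
  fixes f :: "'b \<times> 'c \<Rightarrow> ennreal"
  shows "infsum f (Sigma A B) = infsum (\<lambda>a. infsum (\<lambda>b. f (a, b)) (B a)) A"
proof (rule antisym)
  have "infsum f (Sigma A B) = (SUP F\<in>{F. finite F \<and> F \<subseteq> Sigma A B}. sum f F)"
    by (rule nonneg_infsum_complete) simp
  also have "\<dots> \<le> infsum (\<lambda>a. infsum (\<lambda>b. f (a, b)) (B a)) A"
  proof (rule SUP_least)
    fix F assume F: "F \<in> {F. finite F \<and> F \<subseteq> Sigma A B}"
    have "sum f F = infsum f F" using F by simp
    also have "\<dots> \<le> infsum f (Sigma (fst ` F) B)"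
      by (rule ennreal_infsum_mono_set) (use F in force)
    also have "\<dots> = (\<Sum>a\<in>fst ` F. infsum (\<lambda>b. f (a, b)) (B a))"
      by (rule ennreal_infsum_Sigma_finite) (use F in auto)
    also have "\<dots> = infsum (\<lambda>a. infsum (\<lambda>b. f (a, b)) (B a)) (fst ` F)"
      using F by simp
    also have "\<dots> \<le> infsum (\<lambda>a. infsum (\<lambda>b. f (a, b)) (B a)) A"
      by (rule ennreal_infsum_mono_set) (use F in force)
    finally show "sum f F \<le> \<dots>" .
  qed
  finally show "infsum f (Sigma A B) \<le> infsum (\<lambda>a. infsum (\<lambda>b. f (a, b)) (B a)) A" .
next
  have "infsum (\<lambda>a. infsum (\<lambda>b. f (a, b)) (B a)) A =
        (SUP F\<in>{F. finite F \<and> F \<subseteq> A}. sum (\<lambda>a. infsum (\<lambda>b. f (a, b)) (B a)) F)"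
    by (rule nonneg_infsum_complete) simp
  also have "\<dots> \<le> infsum f (Sigma A B)"
  proof (rule SUP_least)
    fix F assume F: "F \<in> {F. finite F \<and> F \<subseteq> A}"
    have "sum (\<lambda>a. infsum (\<lambda>b. f (a, b)) (B a)) F = infsum f (Sigma F B)"
      by (rule ennreal_infsum_Sigma_finite[symmetric]) (use F in auto)
    also have "\<dots> \<le> infsum f (Sigma A B)"
      by (rule ennreal_infsum_mono_set) (use F in auto)
    finally show "sum (\<lambda>a. infsum (\<lambda>b. f (a, b)) (B a)) F \<le> infsum f (Sigma A B)" .
  qed
  finally show "infsum (\<lambda>a. infsum (\<lambda>b. f (a, b)) (B a)) A \<le> infsum f (Sigma A B)" .
qed

lemma ennreal_infsum_product:
  fixes f :: "'b \<Rightarrow> ennreal" and g :: "'c \<Rightarrow> ennreal"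
  shows "infsum (\<lambda>(a,b). f a * g b) (A \<times> B) = infsum f A * infsum g B"
  by (simp add: ennreal_infsum_Sigma ennreal_infsum_cmult_left ennreal_infsum_cmult_right)

lemma ennreal_infsum_bij:
  fixes f :: "'c \<Rightarrow> ennreal"
  assumes "bij_betw h A B"
  shows "infsum (\<lambda>x. f (h x)) A = infsum f B"
  using infsum_reindex_bij_betw[OF assms, of f] by (simp add: o_def)

lemma real_infsum_ennreal:
  fixes f :: "'b \<Rightarrow> real"
  assumes nn: "\<And>x. x \<in> A \<Longrightarrow> 0 \<le> f x"
    and fin: "infsum (\<lambda>x. ennreal (f x)) A < \<infinity>"
  shows "ennreal (infsum f A) = infsum (\<lambda>x. ennreal (f x)) A"
proof -
  have sfin: "\<And>F. finite F \<Longrightarrow> F \<subseteq> A \<Longrightarrow> sum (\<lambda>x. ennreal (f x)) F \<le> infsum (\<lambda>x. ennreal (f x)) A"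
  proof -
    fix F assume "finite F" "F \<subseteq> A"
    then have "sum (\<lambda>x. ennreal (f x)) F = infsum (\<lambda>x. ennreal (f x)) F" by simp
    also have "\<dots> \<le> infsum (\<lambda>x. ennreal (f x)) A"
      by (rule ennreal_infsum_mono_set) fact
    finally show "sum (\<lambda>x. ennreal (f x)) F \<le> infsum (\<lambda>x. ennreal (f x)) A" .
  qed
  obtain r where r: "infsum (\<lambda>x. ennreal (f x)) A = ennreal r" "0 \<le> r"
    using fin by (cases "infsum (\<lambda>x. ennreal (f x)) A") auto
  have summ: "f summable_on A"
  proof (rule nonneg_bdd_above_summable_on)
    show "\<And>x. x \<in> A \<Longrightarrow> 0 \<le> f x" by (rule nn)
    show "bdd_above (sum f ` {F. F \<subseteq> A \<and> finite F})"
    proof (rule bdd_aboveI)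
      fix s assume "s \<in> sum f ` {F. F \<subseteq> A \<and> finite F}"
      then obtain F where F: "F \<subseteq> A" "finite F" "s = sum f F" by auto
      have "ennreal (sum f F) = sum (\<lambda>x. ennreal (f x)) F"
        using F nn by (subst sum_ennreal[symmetric]) auto
      also have "\<dots> \<le> ennreal r" using sfin[OF F(2,1)] r by simp
      finally show "s \<le> r" using F r by (simp add: ennreal_le_iff)
    qed
  qed
  have "ennreal (infsum f A) = (SUP F\<in>{F. finite F \<and> F \<subseteq> A}. ennreal (sum f F))"
    by (rule infsum_nonneg_is_SUPREMUM_ennreal[OF summ nn])
  also have "\<dots> = (SUP F\<in>{F. finite F \<and> F \<subseteq> A}. sum (\<lambda>x. ennreal (f x)) F)"
    by (rule SUP_cong) (auto simp: nn subsetD intro!: sum_ennreal[symmetric])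
  also have "\<dots> = infsum (\<lambda>x. ennreal (f x)) A"
    by (rule nonneg_infsum_complete[symmetric]) simp
  finally show ?thesis .
qed



locale rw =
  fixes V :: "'a set" and c :: "'a \<Rightarrow> 'a \<Rightarrow> real" and W :: "'a set"
  assumes wg: "weighted_graph V c" and conn: "connected_graph V c"
    and WV: "W \<subseteq> V" and Wne: "W \<noteq> {}"
begin

abbreviation P where "P \<equiv> trans_prob V c"

definition pw :: "'a list \<Rightarrow> ennreal" where "pw l = ennreal (traj_prob V c l)"

definition D where "D = V - W"

lemma finV: "finite V" using wg by (simp add: weighted_graph_def)
lemma c_nonneg: "0 \<le> c a b" using wg by (simp add: weighted_graph_def)
lemma c_sym: "c a b = c b a" using wg by (simp add: weighted_graph_def)
lemma c_V: "c a b \<noteq> 0 \<Longrightarrow> a \<in> V \<and> b \<in> V" using wg unfolding weighted_graph_def by blast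

lemma stat_nonneg: "0 \<le> stat V c a"
  unfolding stat_def by (rule sum_nonneg) (simp add: c_nonneg)

lemma P_nonneg: "0 \<le> P a b"
  unfolding trans_prob_def by (simp add: c_nonneg stat_nonneg)

lemma P_nz: "P a b \<noteq> 0 \<Longrightarrow> a \<in> V \<and> b \<in> V \<and> 0 < c a b"
  unfolding trans_prob_def using c_V c_nonneg
  by (metis div_0 less_eq_real_def)

lemma P_pos_iff: "a \<in> V \<Longrightarrow> 0 < stat V c a \<Longrightarrow> 0 < c a b \<Longrightarrow> 0 < P a b"
  unfolding trans_prob_def by simp

lemma P_sum_le1:
  assumes "finite B" shows "(\<Sum>b\<in>B. P a b) \<le> 1"
proof (cases "stat V c a = 0")
  case True then show ?thesis by (simp add: trans_prob_def)
next
  case False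
  then have sp: "0 < stat V c a" using stat_nonneg[of a] by simp
  have "(\<Sum>b\<in>B. P a b) = (\<Sum>b\<in>B. c a b) / stat V c a"
    by (simp add: trans_prob_def sum_divide_distrib)
  also have "(\<Sum>b\<in>B. c a b) = (\<Sum>b\<in>B \<inter> V. c a b)"
    by (rule sum.mono_neutral_right) (use assms c_V in auto)
  also have "\<dots> \<le> (\<Sum>b\<in>V. c a b)"
    by (rule sum_mono2) (auto simp: finV c_nonneg)
  finally have "(\<Sum>b\<in>B. P a b) \<le> (\<Sum>b\<in>V. c a b) / stat V c a"
    using sp by (simp add: divide_right_mono)
  also have "\<dots> = 1" using sp by (simp add: stat_def)
  finally show ?thesis .
qed

lemma P_sum_eq1:
  assumes "0 < stat V c a" shows "(\<Sum>b\<in>V. P a b) = 1"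
  using assms by (simp add: trans_prob_def sum_divide_distrib[symmetric] stat_def)

lemma traj_prob_Nil[simp]: "traj_prob V c [] = 1"
  by (simp add: traj_prob_def)
lemma traj_prob_single[simp]: "traj_prob V c [a] = 1"
  by (simp add: traj_prob_def)
lemma traj_prob_Cons2[simp]: "traj_prob V c (a # b # l) = P a b * traj_prob V c (b # l)"
  unfolding traj_prob_def by (simp only: length_Cons diff_Suc_1 prod.lessThan_Suc_shift) simp

lemma traj_prob_nonneg: "0 \<le> traj_prob V c l"
  unfolding traj_prob_def by (rule prod_nonneg) (simp add: P_nonneg)

lemma pw_Nil[simp]: "pw [] = 1" and pw_single[simp]: "pw [a] = 1"
  by (simp_all add: pw_def)
lemma pw_Cons2: "pw (a # b # l) = ennreal (P a b) * pw (b # l)"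
  by (simp add: pw_def ennreal_mult P_nonneg traj_prob_nonneg)

lemma pw_append:
  "l1 \<noteq> [] \<Longrightarrow> l2 \<noteq> [] \<Longrightarrow> pw (l1 @ l2) = pw l1 * ennreal (P (last l1) (hd l2)) * pw l2"
proof (induction l1)
  case Nil then show ?case by simp
next
  case (Cons a l1)
  show ?case
  proof (cases l1)
    case Nil
    then show ?thesis using Cons.prems by (cases l2) (simp_all add: pw_Cons2)
  next
    case (Cons b l1')
    then have "pw ((a # l1) @ l2) = ennreal (P a b) * pw (l1 @ l2)"
      by (simp add: pw_Cons2)
    also have "\<dots> = ennreal (P a b) * (pw l1 * ennreal (P (last l1) (hd l2)) * pw l2)"
      using Cons.IH Cons.prems Cons by simp
    finally show ?thesis using Cons by (simp add: pw_Cons2 mult.assoc)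
  qed
qed

lemma pw_join:
  "l1 \<noteq> [] \<Longrightarrow> l2 \<noteq> [] \<Longrightarrow> last l1 = hd l2 \<Longrightarrow> pw (l1 @ tl l2) = pw l1 * pw l2"
proof -
  assume a: "l1 \<noteq> []" "l2 \<noteq> []" "last l1 = hd l2"
  show ?thesis
  proof (cases "tl l2")
    case Nil
    then have "l2 = [hd l2]" using a by (cases l2) auto
    then show ?thesis using Nil by (metis append_Nil2 mult.right_neutral pw_single)
  next
    case (Cons b r)
    then have l2: "l2 = hd l2 # b # r" using a by (cases l2) auto
    have 1: "pw (l1 @ tl l2) = pw l1 * ennreal (P (last l1) b) * pw (b # r)"
      using pw_append[of l1 "b # r"] a Cons by simp
    have 2: "pw l2 = ennreal (P (hd l2) b) * pw (b # r)"
      by (subst l2) (simp add: pw_Cons2)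
    show ?thesis using a 1 2 by (simp add: mult.assoc)
  qed
qed

lemma pw_pos_path:
  assumes "pw l \<noteq> 0" "l \<noteq> []"
  shows "graph_path c l"
  unfolding graph_path_def
proof (intro conjI allI impI)
  show "l \<noteq> []" by fact
  fix i assume i: "Suc i < length l"
  have "traj_prob V c l \<noteq> 0" using assms(1) by (metis ennreal_0 pw_def)
  then have "P (l ! i) (l ! Suc i) \<noteq> 0"
    unfolding traj_prob_def using i by (auto simp: prod_zero_iff)
  then show "adj c (l ! i) (l ! Suc i)" using P_nz by (simp add: adj_def)
qed

lemma pw_zero_outside:
  assumes "i < length l - 1" "l ! i \<notin> V"
  shows "pw l = 0"
proof -
  have "P (l ! i) (l ! Suc i) = 0" using P_nz assms(2) by blast
  then have "traj_prob V c l = 0"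
    unfolding traj_prob_def using assms(1) by (auto simp: prod_zero_iff)
  then show ?thesis by (simp add: pw_def)
qed

end


context rw begin

definition St :: "'a set \<Rightarrow> 'a set \<Rightarrow> 'a \<Rightarrow> 'a list set" where
  "St E T a = {l. l \<noteq> [] \<and> hd l = a \<and> last l \<in> T \<and> set (butlast l) \<subseteq> E}"

definition m :: "'a set \<Rightarrow> 'a set \<Rightarrow> 'a \<Rightarrow> ennreal" where
  "m E T a = infsum pw (St E T a)"

lemma pw_Cons: "l \<noteq> [] \<Longrightarrow> pw (a # l) = ennreal (P a (hd l)) * pw l"
  by (cases l) (auto simp: pw_Cons2)

lemma pf_finite:
  "finite F \<Longrightarrow> \<forall>l\<in>F. l \<noteq> [] \<and> hd l = a \<and> length l \<le> n \<Longrightarrow>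
   \<forall>l\<in>F. \<forall>l'\<in>F. \<forall>r. l' = l @ r \<longrightarrow> r = [] \<Longrightarrow> sum pw F \<le> 1"
proof (induction n arbitrary: a F)
  case 0
  then have "F = {}" by auto
  then show ?case by simp
next
  case (Suc n)
  show ?case
  proof (cases "[a] \<in> F")
    case True
    have "F \<subseteq> {[a]}"
    proof
      fix l assume l: "l \<in> F"
      then have "l = [a] @ tl l" using Suc.prems(2) by (cases l) auto
      then have "tl l = []" using Suc.prems(3) True l by blast
      then show "l \<in> {[a]}" using \<open>l = [a] @ tl l\<close> by simp
    qed
    then have "F = {[a]}" using True by auto
    then show ?thesis by simp
  next
    case False
    have form: "\<And>l. l \<in> F \<Longrightarrow> l = a # tl l \<and> tl l \<noteq> []"
    proof -
      fix l assume l: "l \<in> F"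
      then have "l = a # tl l" using Suc.prems(2) by (cases l) auto
      moreover have "tl l \<noteq> []" using False l \<open>l = a # tl l\<close> by (metis)
      ultimately show "l = a # tl l \<and> tl l \<noteq> []" by simp
    qed
    define B where "B = (\<lambda>l. hd (tl l)) ` F"
    have finB: "finite B" using Suc.prems(1) by (simp add: B_def)
    have "sum pw F = (\<Sum>b\<in>B. sum pw {l\<in>F. hd (tl l) = b})"
      by (rule sum.group[symmetric]) (use Suc.prems(1) finB in \<open>auto simp: B_def\<close>)
    also have "\<dots> \<le> (\<Sum>b\<in>B. ennreal (P a b))"
    proof (rule sum_mono)
      fix b assume "b \<in> B"
      define Fb where "Fb = tl ` {l\<in>F. hd (tl l) = b}"
      have inj: "inj_on tl {l\<in>F. hd (tl l) = b}"
        by (rule inj_onI) (metis (no_types, lifting) form mem_Collect_eq)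
      have "sum pw {l\<in>F. hd (tl l) = b} = (\<Sum>l\<in>{l\<in>F. hd (tl l) = b}. ennreal (P a b) * pw (tl l))"
        by (rule sum.cong) (auto, metis form pw_Cons)
      also have "\<dots> = ennreal (P a b) * sum pw Fb"
        unfolding Fb_def by (simp add: sum_distrib_left sum.reindex[OF inj])
      finally have eq: "sum pw {l\<in>F. hd (tl l) = b} = ennreal (P a b) * sum pw Fb" .
      have "sum pw Fb \<le> 1"
      proof (rule Suc.IH[of Fb b])
        show "finite Fb" using Suc.prems(1) by (simp add: Fb_def)
        show "\<forall>l\<in>Fb. l \<noteq> [] \<and> hd l = b \<and> length l \<le> n"
          using Suc.prems(2) form unfolding Fb_def by force
        show "\<forall>l\<in>Fb. \<forall>l'\<in>Fb. \<forall>r. l' = l @ r \<longrightarrow> r = []"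
        proof (intro ballI allI impI)
          fix l l' r assume "l \<in> Fb" "l' \<in> Fb" "l' = l @ r"
          then obtain l1 l2 where "l1 \<in> F" "l2 \<in> F" "l = tl l1" "l' = tl l2"
            unfolding Fb_def by auto
          then have "l2 = l1 @ r" using form \<open>l' = l @ r\<close> by (metis append_Cons)
          then show "r = []" using Suc.prems(3) \<open>l1 \<in> F\<close> \<open>l2 \<in> F\<close> by blast
        qed
      qed
      then have "ennreal (P a b) * sum pw Fb \<le> ennreal (P a b) * 1"
        by (intro mult_left_mono) auto
      with eq show "sum pw {l\<in>F. hd (tl l) = b} \<le> ennreal (P a b)"
        by simp
    qed
    also have "\<dots> = ennreal (\<Sum>b\<in>B. P a b)"
      by (rule sum_ennreal) (simp add: P_nonneg)
    also have "\<dots> \<le> 1" using P_sum_le1[OF finB] by simp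
    finally show ?thesis .
  qed
qed

lemma pf_le1:
  assumes "\<forall>l\<in>L. l \<noteq> [] \<and> hd l = a" "\<forall>l\<in>L. \<forall>l'\<in>L. \<forall>r. l' = l @ r \<longrightarrow> r = []"
  shows "infsum pw L \<le> 1"
proof -
  have "infsum pw L = (SUP F\<in>{F. finite F \<and> F \<subseteq> L}. sum pw F)"
    by (rule nonneg_infsum_complete) simp
  also have "\<dots> \<le> 1"
  proof (rule SUP_least)
    fix F assume F: "F \<in> {F. finite F \<and> F \<subseteq> L}"
    show "sum pw F \<le> 1"
    proof (rule pf_finite[of F a "Max (length ` F)"])
      show "finite F" using F by simp
      show "\<forall>l\<in>F. l \<noteq> [] \<and> hd l = a \<and> length l \<le> Max (length ` F)"
      proof
        fix l assume l: "l \<in> F"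
        then have "l \<in> L" using F by blast
        then show "l \<noteq> [] \<and> hd l = a \<and> length l \<le> Max (length ` F)"
          using assms(1) l F by (simp add: Max_ge)
      qed
      show "\<forall>l\<in>F. \<forall>l'\<in>F. \<forall>r. l' = l @ r \<longrightarrow> r = []"
      proof (intro ballI allI impI)
        fix l l' r assume "l \<in> F" "l' \<in> F" and e: "l' = l @ r"
        then have Ll: "l \<in> L" and Ll': "l' \<in> L" using F by auto
        have "\<forall>l'\<in>L. \<forall>r. l' = l @ r \<longrightarrow> r = []" using assms(2) Ll by (rule bspec)
        then have "\<forall>r. l' = l @ r \<longrightarrow> r = []" using Ll' by (rule bspec)
        then show "r = []" using e by simp
      qed
    qed
  qed
  finally show ?thesis .
qed

lemma St_pf:
  assumes "E \<inter> T = {}"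
  shows "\<forall>l\<in>St E T a. \<forall>l'\<in>St E T a. \<forall>r. l' = l @ r \<longrightarrow> r = []"
proof (intro ballI allI impI)
  fix l l' r assume l: "l \<in> St E T a" and l': "l' \<in> St E T a" and e: "l' = l @ r"
  show "r = []"
  proof (rule ccontr)
    assume "r \<noteq> []"
    then have "last l \<in> set (butlast l')" using l e by (simp add: St_def butlast_append)
    then show False using l l' assms unfolding St_def by auto
  qed
qed

lemma m_le1: assumes "E \<inter> T = {}" shows "m E T a \<le> 1"
  unfolding m_def
proof (rule pf_le1[of _ a])
  show "\<forall>l\<in>St E T a. l \<noteq> [] \<and> hd l = a" by (simp add: St_def)
  show "\<forall>l\<in>St E T a. \<forall>l'\<in>St E T a. \<forall>r. l' = l @ r \<longrightarrow> r = []" by (rule St_pf[OF assms])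
qed

lemma St_T: "E \<inter> T = {} \<Longrightarrow> t \<in> T \<Longrightarrow> St E T t = {[t]}"
proof -
  assume a: "E \<inter> T = {}" "t \<in> T"
  have "l = [t]" if "l \<in> St E T t" for l
  proof -
    have "l \<noteq> []" "hd l = t" "set (butlast l) \<subseteq> E" using that by (auto simp: St_def)
    then show ?thesis using a
    proof (cases l)
      case (Cons u r)
      then show ?thesis using \<open>hd l = t\<close> \<open>set (butlast l) \<subseteq> E\<close> a
        by (cases r) auto
    qed simp
  qed
  then show ?thesis using a by (auto simp: St_def)
qed

lemma m_T: "E \<inter> T = {} \<Longrightarrow> t \<in> T \<Longrightarrow> m E T t = 1"
  by (simp add: m_def St_T)

lemma m_first_step:
  assumes "E \<inter> T = {}" "a \<in> E"
  shows "m E T a = (\<Sum>b\<in>V. ennreal (P a b) * m E T b)"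
proof -
  define A' where "A' = {l \<in> St E T a. hd (tl l) \<in> V}"
  have form: "\<And>l. l \<in> St E T a \<Longrightarrow> l = a # tl l \<and> tl l \<noteq> []"
  proof -
    fix l assume l: "l \<in> St E T a"
    then have 1: "l = a # tl l" by (cases l) (auto simp: St_def)
    have "tl l \<noteq> []"
    proof
      assume "tl l = []"
      then have "l = [a]" using 1 by simp
      then show False using l assms by (auto simp: St_def)
    qed
    then show "l = a # tl l \<and> tl l \<noteq> []" using 1 by simp
  qed
  have "m E T a = infsum pw A'"
    unfolding m_def
  proof (rule infsum_cong_neutral)
    fix l assume "l \<in> St E T a - A'"
    then have "l \<in> St E T a" "hd (tl l) \<notin> V" by (auto simp: A'_def)
    then show "pw l = 0" using form[of l] pw_Cons[of "tl l" a] P_nz by (metis mult_zero_left ennreal_0)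
  qed (auto simp: A'_def)
  also have "\<dots> = infsum (\<lambda>(b, \<beta>). pw (a # \<beta>)) (Sigma V (St E T))"
  proof -
    have "bij_betw (\<lambda>(b, \<beta>). a # \<beta>) (Sigma V (St E T)) A'"
    proof (rule bij_betw_imageI)
      show "inj_on (\<lambda>(b, \<beta>). a # \<beta>) (Sigma V (St E T))"
        by (rule inj_onI) (auto simp: St_def)
      show "(\<lambda>(b, \<beta>). a # \<beta>) ` Sigma V (St E T) = A'"
      proof
        show "(\<lambda>(b, \<beta>). a # \<beta>) ` Sigma V (St E T) \<subseteq> A'"
          using assms(2) by (auto simp: A'_def St_def split: if_splits)
        show "A' \<subseteq> (\<lambda>(b, \<beta>). a # \<beta>) ` Sigma V (St E T)"
        proof
          fix l assume l: "l \<in> A'"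
          then have l1: "l \<in> St E T a" "hd (tl l) \<in> V" by (auto simp: A'_def)
          have f: "l = a # tl l" "tl l \<noteq> []" using form[OF l1(1)] by auto
          have sb: "set (butlast (tl l)) \<subseteq> set (butlast l)"
            using f by (cases l) auto
          have "tl l \<in> St E T (hd (tl l))"
            using l1(1) f sb last_tl[of l] unfolding St_def by auto
          then show "l \<in> (\<lambda>(b, \<beta>). a # \<beta>) ` Sigma V (St E T)"
            using l1(2) f by (auto intro!: image_eqI[where x="(hd (tl l), tl l)"])
        qed
      qed
    qed
    from ennreal_infsum_bij[OF this, of pw]
    have "infsum (\<lambda>x. pw (case x of (b, \<beta>) \<Rightarrow> a # \<beta>)) (Sigma V (St E T)) = infsum pw A'" .
    moreover have "(\<lambda>x. pw (case x of (b, \<beta>) \<Rightarrow> a # \<beta>)) = (\<lambda>(b, \<beta>). pw (a # \<beta>))"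
      by (auto simp: fun_eq_iff)
    ultimately show ?thesis by metis
  qed
  also have "\<dots> = infsum (\<lambda>(b, \<beta>). ennreal (P a b) * pw \<beta>) (Sigma V (St E T))"
    by (rule infsum_cong) (auto simp: St_def pw_Cons)
  also have "\<dots> = infsum (\<lambda>b. infsum (\<lambda>\<beta>. ennreal (P a b) * pw \<beta>) (St E T b)) V"
    using ennreal_infsum_Sigma[of "\<lambda>(b, \<beta>). ennreal (P a b) * pw \<beta>" V "St E T"] by simp
  also have "\<dots> = (\<Sum>b\<in>V. infsum (\<lambda>\<beta>. ennreal (P a b) * pw \<beta>) (St E T b))"
    using finV by (rule infsum_finite)
  also have "\<dots> = (\<Sum>b\<in>V. ennreal (P a b) * m E T b)"
    unfolding m_def by (rule sum.cong[OF refl], rule ennreal_infsum_cmult_left)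
  finally show ?thesis .
qed


lemma stat_pos: assumes "a \<in> V - W" shows "0 < stat V c a"
proof -
  obtain w where w: "w \<in> W" using Wne by auto
  then have "w \<in> V" using WV by auto
  then obtain q where q: "graph_path c q" "hd q = a" "last q = w"
    using conn assms unfolding connected_graph_def by blast
  have "q \<noteq> []" using q by (simp add: graph_path_def)
  have "length q \<noteq> 1"
  proof
    assume "length q = 1"
    then have "q = [hd q]" by (cases q) auto
    then have "a = w" using q by (metis last_ConsL)
    then show False using assms w by auto
  qed
  then have l2: "Suc 0 < length q" using \<open>q \<noteq> []\<close> by (cases q) auto
  then have "adj c (q ! 0) (q ! Suc 0)" using q(1) by (simp add: graph_path_def)
  then have cp: "0 < c a (q ! Suc 0)" using q(2) \<open>q \<noteq> []\<close> by (simp add: adj_def hd_conv_nth)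
  then have "q ! Suc 0 \<in> V" using c_V by (metis less_irrefl)
  then have "c a (q ! Suc 0) \<le> (\<Sum>b\<in>V. c a b)"
    by (intro member_le_sum) (auto simp: c_nonneg finV)
  then show ?thesis using cp by (simp add: stat_def)
qed

lemma absorb:
  assumes ET: "E \<inter> T = {}" "E \<union> T = V" "W \<subseteq> T" and a: "a \<in> V"
  shows "m E T a = 1"
proof (cases "a \<in> T")
  case True then show ?thesis using m_T ET by simp
next
  case False
  then have aE: "a \<in> E" using a ET by auto
  have EV: "E \<subseteq> V - W" using ET by auto
  define d where "d b = 1 - enn2real (m E T b)" for b
  have mle: "m E T b \<le> 1" for b by (rule m_le1[OF ET(1)])
  then have mfin: "m E T b = ennreal (enn2real (m E T b))" for b
    by (metis ennreal_enn2real ennreal_one_less_top le_less_trans less_imp_neq)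
  have d_nonneg: "0 \<le> d b" for b
  proof -
    have "enn2real (m E T b) \<le> enn2real 1" by (rule enn2real_mono[OF mle]) simp
    then show ?thesis by (simp add: d_def)
  qed
  have dT: "d t = 0" if "t \<in> T" for t using m_T[OF ET(1) that] by (simp add: d_def)
  have dE: "d b = (\<Sum>b'\<in>V. P b b' * d b')" if bE: "b \<in> E" for b
  proof -
    have "m E T b = (\<Sum>b'\<in>V. ennreal (P b b') * m E T b')" by (rule m_first_step[OF ET(1) bE])
    also have "\<dots> = (\<Sum>b'\<in>V. ennreal (P b b' * enn2real (m E T b')))"
      by (rule sum.cong[OF refl]) (metis mfin ennreal_mult P_nonneg enn2real_nonneg)
    also have "\<dots> = ennreal (\<Sum>b'\<in>V. P b b' * enn2real (m E T b'))"
      by (rule sum_ennreal) (simp add: P_nonneg)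
    finally have "enn2real (m E T b) = (\<Sum>b'\<in>V. P b b' * enn2real (m E T b'))"
      by (simp add: sum_nonneg P_nonneg)
    moreover have "(\<Sum>b'\<in>V. P b b') = 1" using stat_pos[of b] EV bE by (intro P_sum_eq1) auto
    ultimately show ?thesis
      by (simp add: d_def algebra_simps sum_subtractf sum_distrib_left)
  qed
  have finE: "finite E" using EV finV by (meson finite_Diff finite_subset)
  define M where "M = Max (d ` E)"
  obtain a0 where a0: "a0 \<in> E" "d a0 = M"
  proof -
    have "Max (d ` E) \<in> d ` E" using finE aE by (intro Max_in) auto
    then show thesis using that unfolding M_def by auto
  qed
  have dle: "d b \<le> M" if "b \<in> V" for b
  proof (cases "b \<in> T")
    case True then show ?thesis using dT d_nonneg[of a0] a0 by simp
  next
    case False then have "b \<in> E" using that ET by auto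
    then show ?thesis unfolding M_def using finE by (simp add: Max_ge)
  qed
  have avg: "d b' = M" if b: "b \<in> E" "d b = M" "b' \<in> V" "0 < c b b'" for b b'
  proof -
    have s1: "(\<Sum>b'\<in>V. P b b') = 1" using stat_pos[of b] EV b by (intro P_sum_eq1) auto
    have "(\<Sum>x\<in>V. P b x * (M - d x)) = M * (\<Sum>x\<in>V. P b x) - (\<Sum>x\<in>V. P b x * d x)"
      by (simp add: algebra_simps sum_subtractf sum_distrib_left)
    also have "\<dots> = 0" using s1 dE[OF b(1)] b(2) by simp
    finally have sum0: "(\<Sum>x\<in>V. P b x * (M - d x)) = 0" .
    have nn: "\<forall>x\<in>V. 0 \<le> P b x * (M - d x)"
    proof
      fix x assume "x \<in> V"
      then have "d x \<le> M" by (rule dle)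
      then show "0 \<le> P b x * (M - d x)" using P_nonneg[of b x] by (intro mult_nonneg_nonneg) linarith+
    qed
    have iff: "((\<Sum>x\<in>V. P b x * (M - d x)) = 0) = (\<forall>x\<in>V. P b x * (M - d x) = 0)"
      by (rule sum_nonneg_eq_0_iff[OF finV]) (rule bspec[OF nn])
    have all: "\<forall>x\<in>V. P b x * (M - d x) = 0" using iffD1[OF iff sum0] .
    have "P b b' * (M - d b') = 0" using all b(3) by (rule bspec)
    moreover have "0 < P b b'" using P_pos_iff[of b b'] stat_pos[of b] EV b by auto
    ultimately show ?thesis by simp
  qed
  obtain w where w: "w \<in> W" using Wne by auto
  then obtain q where q: "graph_path c q" "hd q = a0" "last q = w"
    using conn a0 EV WV unfolding connected_graph_def by blast
  have qne: "q \<noteq> []" using q by (simp add: graph_path_def)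
  have ex: "\<exists>k. k < length q \<and> q ! k \<in> T"
    using qne q(3) w ET(3) by (intro exI[of _ "length q - 1"]) (auto simp: last_conv_nth)
  define k where "k = (LEAST k. k < length q \<and> q ! k \<in> T)"
  have k: "k < length q" "q ! k \<in> T" using LeastI_ex[OF ex] unfolding k_def by auto
  have kmin: "\<not> (q ! i \<in> T)" if "i < k" for i
  proof -
    have "i < (LEAST k. k < length q \<and> q ! k \<in> T)" using that by (simp add: k_def)
    then have "\<not> (i < length q \<and> q ! i \<in> T)" by (rule not_less_Least)
    then show ?thesis using that k(1) by simp
  qed
  have "\<forall>i. i \<le> k \<longrightarrow> d (q ! i) = M"
  proof (intro allI)
    fix i show "i \<le> k \<longrightarrow> d (q ! i) = M"
    proof (induction i)
      case 0 then show ?case using q(2) qne a0 by (simp add: hd_conv_nth)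
    next
      case (Suc i)
      show ?case
      proof
        assume ik: "Suc i \<le> k"
        then have di: "d (q ! i) = M" using Suc by simp
        have "Suc i < length q" using ik k by simp
        then have "adj c (q ! i) (q ! Suc i)" using q(1) by (simp add: graph_path_def)
        then have cp: "0 < c (q ! i) (q ! Suc i)" by (simp add: adj_def)
        then have V2: "q ! i \<in> V" "q ! Suc i \<in> V" using c_V by (metis less_irrefl)+
        have "q ! i \<in> E" using V2 kmin[of i] ik ET by auto
        then show "d (q ! Suc i) = M" using avg[OF _ di V2(2) cp] by simp
      qed
    qed
  qed
  then have "M = 0" using dT[OF k(2)] by auto
  then have "d a = 0" using dle[OF a] d_nonneg[of a] by simp
  then have "enn2real (m E T a) = 1" by (simp add: d_def)
  then show ?thesis using mfin[of a] by simp
qed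

end


definition le_step :: "'a list \<Rightarrow> 'a \<Rightarrow> 'a list" where
  "le_step s v = (if v \<in> set s then takeWhile (\<lambda>u. u \<noteq> v) s @ [v] else s @ [v])"

definition LE :: "'a list \<Rightarrow> 'a list" where "LE l = foldl le_step [] l"

lemma LE_Nil[simp]: "LE [] = []" by (simp add: LE_def)
lemma LE_snoc: "LE (l @ [v]) = le_step (LE l) v" by (simp add: LE_def)
lemma LE_append: "LE (l1 @ l2) = foldl le_step (LE l1) l2" by (simp add: LE_def)

lemma le_step_ne: "le_step s v \<noteq> []" by (simp add: le_step_def)
lemma le_step_last: "last (le_step s v) = v" by (simp add: le_step_def)
lemma le_step_hd: "s \<noteq> [] \<Longrightarrow> hd (le_step s v) = hd s"
  unfolding le_step_def by (cases s) auto
lemma le_step_distinct: "distinct s \<Longrightarrow> distinct (le_step s v)"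
proof -
  assume d: "distinct s"
  have "distinct (takeWhile (\<lambda>u. u \<noteq> v) s)"
    using d by (metis distinct_append takeWhile_dropWhile_id)
  moreover have "v \<notin> set (takeWhile (\<lambda>u. u \<noteq> v) s)"
    by (metis (mono_tags) set_takeWhileD)
  ultimately show ?thesis using d by (simp add: le_step_def)
qed
lemma le_step_set: "set (le_step s v) \<subseteq> insert v (set s)"
  unfolding le_step_def by (auto dest: set_takeWhileD)

lemma LE_props:
  "l \<noteq> [] \<Longrightarrow> LE l \<noteq> [] \<and> hd (LE l) = hd l \<and> last (LE l) = last l"
proof (induction l rule: rev_induct)
  case Nil then show ?case by simp
next
  case (snoc v l)
  show ?case
  proof (cases "l = []")
    case True then show ?thesis by (simp add: LE_def le_step_def)
  next
    case False
    then show ?thesis using snoc.IH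
      by (simp add: LE_snoc le_step_ne le_step_last le_step_hd)
  qed
qed

lemma LE_distinct: "distinct (LE l)"
  by (induction l rule: rev_induct) (simp_all add: LE_snoc le_step_distinct)

lemma LE_set: "set (LE l) \<subseteq> set l"
proof (induction l rule: rev_induct)
  case Nil then show ?case by simp
next
  case (snoc v l) then show ?case using le_step_set[of "LE l" v] by (auto simp: LE_snoc)
qed

lemma fold_le_Cons:
  "u \<notin> set l \<Longrightarrow> foldl le_step (u # s) l = u # foldl le_step s l"
proof (induction l arbitrary: s)
  case Nil then show ?case by simp
next
  case (Cons x l)
  have ux: "x \<noteq> u" using Cons.prems by auto
  have "le_step (u # s) x = u # le_step s x"
    using ux by (auto simp: le_step_def)
  then show ?case using Cons by simp
qed

lemma distinct_hd_last: "distinct xs \<Longrightarrow> xs \<noteq> [] \<Longrightarrow> hd xs = last xs \<Longrightarrow> xs = [hd xs]"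
proof (cases xs)
  case (Cons a r)
  assume d: "distinct xs" "hd xs = last xs"
  show ?thesis
  proof (cases r)
    case (Cons b r')
    then have "last xs \<in> set r" using \<open>xs = a # r\<close> by simp
    then show ?thesis using d \<open>xs = a # r\<close> by auto
  qed (use \<open>xs = a # r\<close> in simp)
qed simp

lemma LE_loop: "l \<noteq> [] \<Longrightarrow> hd l = last l \<Longrightarrow> LE l = [hd l]"
  using distinct_hd_last[of "LE l"] LE_props[of l] LE_distinct[of l] by simp

lemma LE_loop_append:
  assumes "l0 \<noteq> []" "hd l0 = v" "last l0 = v" "v \<notin> set b"
  shows "LE (l0 @ b) = v # LE b"
proof -
  have "LE l0 = [v]" using LE_loop[of l0] assms by simp
  then have "LE (l0 @ b) = foldl le_step [v] b" by (simp add: LE_append)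
  also have "\<dots> = v # foldl le_step [] b" using fold_le_Cons[OF assms(4)] by simp
  finally show ?thesis by (simp add: LE_def)
qed

lemma bij_betw_restrict:
  assumes "bij_betw h A B" "\<And>x. x \<in> A \<Longrightarrow> R (h x) \<longleftrightarrow> S x"
  shows "bij_betw h {x\<in>A. S x} {y\<in>B. R y}"
proof (rule bij_betw_subset[OF assms(1)])
  show "{x \<in> A. S x} \<subseteq> A" by auto
  show "h ` {x \<in> A. S x} = {y \<in> B. R y}"
  proof
    show "h ` {x \<in> A. S x} \<subseteq> {y \<in> B. R y}"
      using assms bij_betw_imp_surj_on by fastforce
    show "{y \<in> B. R y} \<subseteq> h ` {x \<in> A. S x}"
    proof
      fix y assume y: "y \<in> {y \<in> B. R y}"
      then obtain x where "x \<in> A" "y = h x" using assms(1) by (auto simp: bij_betw_def)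
      then show "y \<in> h ` {x \<in> A. S x}" using y assms(2) by auto
    qed
  qed
qed

context rw begin

definition Paths :: "'a set \<Rightarrow> 'a \<Rightarrow> 'a \<Rightarrow> 'a list set" where
  "Paths E a b = {l. l \<noteq> [] \<and> hd l = a \<and> last l = b \<and> set l \<subseteq> E}"

definition G :: "'a set \<Rightarrow> 'a \<Rightarrow> 'a \<Rightarrow> ennreal" where
  "G E a b = infsum pw (Paths E a b)"

definition Q :: "'a set \<Rightarrow> 'a set \<Rightarrow> 'a list \<Rightarrow> ennreal" where
  "Q E T \<gamma> = infsum pw {\<alpha> \<in> St E T (hd \<gamma>). LE \<alpha> = \<gamma>}"

fun FF :: "'a set \<Rightarrow> 'a list \<Rightarrow> ennreal" where
  "FF E [] = 1"
| "FF E (v # s) = G E v v * FF (E - {v}) s"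

lemma G_notin: "a \<notin> E \<Longrightarrow> G E a b = 0"
proof -
  assume "a \<notin> E"
  then have "Paths E a b = {}" unfolding Paths_def by (auto, metis hd_in_set subsetD)
  then show ?thesis by (simp add: G_def)
qed

lemma split_last_visit:
  assumes ET: "E \<inter> T = {}" and vE: "v \<in> E"
  shows "bij_betw (\<lambda>(l0, b). l0 @ b) (Paths E v v \<times> {b. b \<noteq> [] \<and> last b \<in> T \<and> set (butlast b) \<subseteq> E - {v}})
           (St E T v)"
proof (rule bij_betw_imageI)
  have vT: "v \<notin> T" using ET vE by auto
  show "inj_on (\<lambda>(l0, b). l0 @ b) (Paths E v v \<times> {b. b \<noteq> [] \<and> last b \<in> T \<and> set (butlast b) \<subseteq> E - {v}})"
  proof (rule inj_onI, clarify)
    fix l0 b l0' b'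
    assume l0: "l0 \<in> Paths E v v" and b: "b \<noteq> []" "last b \<in> T" "set (butlast b) \<subseteq> E - {v}"
      and l0': "l0' \<in> Paths E v v" and b': "b' \<noteq> []" "last b' \<in> T" "set (butlast b') \<subseteq> E - {v}"
      and e: "l0 @ b = l0' @ b'"
    have nb: "v \<notin> set b"
    proof
      assume "v \<in> set b"
      then have "v \<in> set (butlast b) \<or> v = last b" using b(1) by (metis append_butlast_last_id in_set_butlast_appendI rotate1.simps(2) set_ConsD set_rotate1)
      then show False using b vT by auto
    qed
    have nb': "v \<notin> set b'"
    proof
      assume "v \<in> set b'"
      then have "v \<in> set (butlast b') \<or> v = last b'" using b'(1) by (metis append_butlast_last_id in_set_butlast_appendI rotate1.simps(2) set_ConsD set_rotate1)
      then show False using b' vT by auto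
    qed
    have ll0: "l0 \<noteq> []" "last l0 = v" "l0' \<noteq> []" "last l0' = v" using l0 l0' by (auto simp: Paths_def)
    obtain us where "(l0 = l0' @ us \<and> us @ b = b') \<or> (l0 @ us = l0' \<and> b = us @ b')"
      using e by (auto simp: append_eq_append_conv2)
    then have "l0 = l0'"
    proof
      assume h: "l0 = l0' @ us \<and> us @ b = b'"
      show "l0 = l0'"
      proof (cases "us = []")
        case False
        then have "last us = v" using h ll0 by (metis last_append)
        then have "v \<in> set b'" using h False by (metis Un_iff last_in_set set_append)
        then show ?thesis using nb' by simp
      qed (use h in simp)
    next
      assume h: "l0 @ us = l0' \<and> b = us @ b'"
      show "l0 = l0'"
      proof (cases "us = []")
        case False
        then have "last us = v" using h ll0 by (metis last_append)
        then have "v \<in> set b" using h False by (metis Un_iff last_in_set set_append)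
        then show ?thesis using nb by simp
      qed (use h in simp)
    qed
    then show "l0 = l0' \<and> b = b'" using e by simp
  qed
  show "(\<lambda>(l0, b). l0 @ b) ` (Paths E v v \<times> {b. b \<noteq> [] \<and> last b \<in> T \<and> set (butlast b) \<subseteq> E - {v}}) = St E T v"
  proof
    show "(\<lambda>(l0, b). l0 @ b) ` (Paths E v v \<times> {b. b \<noteq> [] \<and> last b \<in> T \<and> set (butlast b) \<subseteq> E - {v}}) \<subseteq> St E T v"
    proof clarify
      fix l0 b assume l0: "l0 \<in> Paths E v v" and b: "b \<noteq> []" "last b \<in> T" "set (butlast b) \<subseteq> E - {v}"
      have "l0 \<noteq> []" "hd l0 = v" "set l0 \<subseteq> E" using l0 by (auto simp: Paths_def)
      then show "l0 @ b \<in> St E T v" using b unfolding St_def by (auto simp: butlast_append)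
    qed
    show "St E T v \<subseteq> (\<lambda>(l0, b). l0 @ b) ` (Paths E v v \<times> {b. b \<noteq> [] \<and> last b \<in> T \<and> set (butlast b) \<subseteq> E - {v}})"
    proof
      fix \<alpha> assume a: "\<alpha> \<in> St E T v"
      then have a1: "\<alpha> \<noteq> []" "hd \<alpha> = v" "last \<alpha> \<in> T" "set (butlast \<alpha>) \<subseteq> E"
        by (auto simp: St_def)
      have "v \<in> set \<alpha>" using a1 by auto
      then obtain ys zs where yz: "\<alpha> = ys @ v # zs" "v \<notin> set zs" using split_list_last by metis
      have zne: "zs \<noteq> []" using yz a1(3) vT by auto
      have bl: "butlast \<alpha> = ys @ v # butlast zs" using yz zne by (simp add: butlast_append)
      have "ys @ [v] \<in> Paths E v v"
        using a1 bl yz unfolding Paths_def by (cases ys) auto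
      moreover have "set (butlast zs) \<subseteq> E - {v}"
        using a1(4) bl yz(2) in_set_butlastD by fastforce
      moreover have "last zs \<in> T" using a1(3) yz zne by simp
      ultimately show "\<alpha> \<in> (\<lambda>(l0, b). l0 @ b) ` (Paths E v v \<times> {b. b \<noteq> [] \<and> last b \<in> T \<and> set (butlast b) \<subseteq> E - {v}})"
        using zne yz by (intro image_eqI[where x="(ys @ [v], zs)"]) auto
    qed
  qed
qed


lemma notin_set_b:
  assumes "b \<noteq> []" "last b \<in> T" "set (butlast b) \<subseteq> E - {v}" "v \<notin> T"
  shows "v \<notin> set b"
proof
  assume "v \<in> set b"
  then have "v \<in> set (butlast b) \<or> v = last b" using assms(1)
    by (metis append_butlast_last_id in_set_butlast_appendI rotate1.simps(2) set_ConsD set_rotate1)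
  then show False using assms by auto
qed

lemma Q_formula:
  assumes "E \<inter> T = {}" "\<gamma> \<noteq> []" "last \<gamma> \<in> T"
  shows "Q E T \<gamma> = pw \<gamma> * FF E (butlast \<gamma>)"
  using assms
proof (induction \<gamma> arbitrary: E)
  case Nil then show ?case by simp
next
  case (Cons v \<gamma>')
  show ?case
  proof (cases "\<gamma>' = []")
    case True
    then have vT: "v \<in> T" using Cons.prems by simp
    have st: "St E T v = {[v]}" by (rule St_T[OF Cons.prems(1) vT])
    have lv: "LE [v] = [v]" by (simp add: LE_def le_step_def)
    have "{\<alpha> \<in> St E T v. LE \<alpha> = [v]} = {[v]}"
      unfolding st using lv by blast
    then show ?thesis using True by (simp add: Q_def)
  next
    case False
    have lT: "last \<gamma>' \<in> T" using Cons.prems False by simp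
    show ?thesis
    proof (cases "v \<in> E")
      case False
      have e: "{\<alpha> \<in> St E T v. LE \<alpha> = v # \<gamma>'} = {}"
      proof (rule ccontr)
        assume "{\<alpha> \<in> St E T v. LE \<alpha> = v # \<gamma>'} \<noteq> {}"
        then obtain \<alpha> where a: "\<alpha> \<in> St E T v" "LE \<alpha> = v # \<gamma>'" by auto
        then have a1: "\<alpha> \<noteq> []" "hd \<alpha> = v" "set (butlast \<alpha>) \<subseteq> E" by (auto simp: St_def)
        then obtain r where r: "\<alpha> = v # r" by (cases \<alpha>) auto
        show False
        proof (cases "r = []")
          case True
          then have "LE \<alpha> = [v]" using r by (simp add: LE_def le_step_def)
          then show False using a \<open>\<gamma>' \<noteq> []\<close> by simp
        next
          case False
          then have "v \<in> set (butlast \<alpha>)" using r by simp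
          then show False using a1 \<open>v \<notin> E\<close> by auto
        qed
      qed
      have "Q E T (v # \<gamma>') = 0" unfolding Q_def list.sel(1) e by simp
      then show ?thesis using G_notin[OF False] \<open>\<gamma>' \<noteq> []\<close> by simp
    next
      case True
      have vT: "v \<notin> T" using Cons.prems(1) True by auto
      define Bf where "Bf = {b. b \<noteq> [] \<and> last b \<in> T \<and> set (butlast b) \<subseteq> E - {v}}"
      define B where "B = {b \<in> St (E - {v}) T (hd \<gamma>'). LE b = \<gamma>'}"
      have bij0: "bij_betw (\<lambda>(l0, b). l0 @ b) (Paths E v v \<times> Bf) (St E T v)"
        unfolding Bf_def by (rule split_last_visit[OF Cons.prems(1) True])
      have cond: "LE ((\<lambda>(l0, b). l0 @ b) x) = v # \<gamma>' \<longleftrightarrow> snd x \<in> B"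
        if x: "x \<in> Paths E v v \<times> Bf" for x
      proof -
        obtain l0 b where xe: "x = (l0, b)" by (cases x)
        have l0: "l0 \<noteq> []" "hd l0 = v" "last l0 = v" using x xe by (auto simp: Paths_def)
        have b: "b \<noteq> []" "last b \<in> T" "set (butlast b) \<subseteq> E - {v}" using x xe by (auto simp: Bf_def)
        have vb: "v \<notin> set b" by (rule notin_set_b[OF b vT])
        have "LE (l0 @ b) = v # LE b" by (rule LE_loop_append[OF l0 vb])
        moreover have "LE b = \<gamma>' \<Longrightarrow> hd b = hd \<gamma>'" using LE_props[OF b(1)] by simp
        ultimately show ?thesis using xe b by (auto simp: B_def St_def)
      qed
      have bij: "bij_betw (\<lambda>(l0, b). l0 @ b) (Paths E v v \<times> B) {\<alpha> \<in> St E T v. LE \<alpha> = v # \<gamma>'}"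
      proof -
        have "bij_betw (\<lambda>(l0, b). l0 @ b) {x \<in> Paths E v v \<times> Bf. snd x \<in> B} {\<alpha> \<in> St E T v. LE \<alpha> = v # \<gamma>'}"
          by (rule bij_betw_restrict[where R="\<lambda>\<alpha>. LE \<alpha> = v # \<gamma>'" and S="\<lambda>x. snd x \<in> B", OF bij0 cond])
        moreover have "{x \<in> Paths E v v \<times> Bf. snd x \<in> B} = Paths E v v \<times> B"
          by (auto simp: B_def Bf_def St_def)
        ultimately show ?thesis by simp
      qed
      have "Q E T (v # \<gamma>') = infsum pw {\<alpha> \<in> St E T v. LE \<alpha> = v # \<gamma>'}" by (simp add: Q_def)
      also have "\<dots> = infsum (\<lambda>x. pw ((\<lambda>(l0, b). l0 @ b) x)) (Paths E v v \<times> B)"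
        by (rule ennreal_infsum_bij[OF bij, symmetric])
      also have "\<dots> = infsum (\<lambda>(l0, b). pw l0 * (ennreal (P v (hd \<gamma>')) * pw b)) (Paths E v v \<times> B)"
      proof (rule infsum_cong)
        fix x assume x: "x \<in> Paths E v v \<times> B"
        obtain l0 b where xe: "x = (l0, b)" by (cases x)
        have l0: "l0 \<noteq> []" "last l0 = v" using x xe by (auto simp: Paths_def)
        have b: "b \<noteq> []" "hd b = hd \<gamma>'" using x xe by (auto simp: B_def St_def)
        show "pw ((\<lambda>(l0, b). l0 @ b) x) = (\<lambda>(l0, b). pw l0 * (ennreal (P v (hd \<gamma>')) * pw b)) x"
          using pw_append[OF l0(1) b(1)] l0 b xe by (simp add: mult.assoc)
      qed
      also have "\<dots> = G E v v * infsum (\<lambda>b. ennreal (P v (hd \<gamma>')) * pw b) B"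
        unfolding G_def by (rule ennreal_infsum_product)
      also have "\<dots> = G E v v * (ennreal (P v (hd \<gamma>')) * Q (E - {v}) T \<gamma>')"
        by (simp add: ennreal_infsum_cmult_left Q_def B_def)
      also have "Q (E - {v}) T \<gamma>' = pw \<gamma>' * FF (E - {v}) (butlast \<gamma>')"
        using Cons.IH[of "E - {v}"] Cons.prems(1) \<open>\<gamma>' \<noteq> []\<close> lT by auto
      finally show ?thesis using \<open>\<gamma>' \<noteq> []\<close>
        by (simp add: pw_Cons mult_ac)
    qed
  qed
qed

end


context rw begin

definition Hs :: "'a set \<Rightarrow> 'a \<Rightarrow> 'a \<Rightarrow> 'a list set" where
  "Hs E b a = {l \<in> Paths E b a. a \<notin> set (butlast l)}"

definition H :: "'a set \<Rightarrow> 'a \<Rightarrow> 'a \<Rightarrow> ennreal" where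
  "H E b a = infsum pw (Hs E b a)"

lemma split_first_visit:
  "bij_betw (\<lambda>(l1, l2). l1 @ tl l2) (Hs E b a \<times> Paths E a z) {l \<in> Paths E b z. a \<in> set l}"
proof (rule bij_betw_imageI)
  show "inj_on (\<lambda>(l1, l2). l1 @ tl l2) (Hs E b a \<times> Paths E a z)"
  proof (rule inj_onI, clarify)
    fix l1 l2 l1' l2'
    assume l1: "l1 \<in> Hs E b a" and l2: "l2 \<in> Paths E a z"
      and l1': "l1' \<in> Hs E b a" and l2': "l2' \<in> Paths E a z"
      and e: "l1 @ tl l2 = l1' @ tl l2'"
    have h1: "l1 \<noteq> []" "last l1 = a" "a \<notin> set (butlast l1)" using l1 by (auto simp: Hs_def Paths_def)
    have h1': "l1' \<noteq> []" "last l1' = a" "a \<notin> set (butlast l1')" using l1' by (auto simp: Hs_def Paths_def)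
    have h2: "l2 \<noteq> []" "hd l2 = a" "l2' \<noteq> []" "hd l2' = a" using l2 l2' by (auto simp: Paths_def)
    obtain us where "(l1 = l1' @ us \<and> us @ tl l2 = tl l2') \<or> (l1 @ us = l1' \<and> tl l2 = us @ tl l2')"
      using e by (auto simp: append_eq_append_conv2)
    then have "l1 = l1'"
    proof
      assume h: "l1 = l1' @ us \<and> us @ tl l2 = tl l2'"
      show ?thesis
      proof (cases "us = []")
        case False
        then have "butlast l1 = l1' @ butlast us" using h by (simp add: butlast_append)
        then have "a \<in> set (butlast l1)" using h1' by (metis Un_iff last_in_set set_append)
        then show ?thesis using h1 by simp
      qed (use h in simp)
    next
      assume h: "l1 @ us = l1' \<and> tl l2 = us @ tl l2'"
      show ?thesis
      proof (cases "us = []")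
        case False
        then have "butlast l1' = l1 @ butlast us" using h by (metis butlast_append)
        then have "a \<in> set (butlast l1')" using h1 by (metis Un_iff last_in_set set_append)
        then show ?thesis using h1' by simp
      qed (use h in simp)
    qed
    moreover then have "tl l2 = tl l2'" using e by simp
    then have "l2 = l2'" using h2 by (metis list.collapse)
    ultimately show "l1 = l1' \<and> l2 = l2'" by simp
  qed
  show "(\<lambda>(l1, l2). l1 @ tl l2) ` (Hs E b a \<times> Paths E a z) = {l \<in> Paths E b z. a \<in> set l}"
  proof
    show "(\<lambda>(l1, l2). l1 @ tl l2) ` (Hs E b a \<times> Paths E a z) \<subseteq> {l \<in> Paths E b z. a \<in> set l}"
    proof clarify
      fix l1 l2 assume l1: "l1 \<in> Hs E b a" and l2: "l2 \<in> Paths E a z"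
      have h1: "l1 \<noteq> []" "hd l1 = b" "last l1 = a" "set l1 \<subseteq> E" using l1 by (auto simp: Hs_def Paths_def)
      have h2: "l2 \<noteq> []" "hd l2 = a" "last l2 = z" "set l2 \<subseteq> E" using l2 by (auto simp: Paths_def)
      have "last (l1 @ tl l2) = z"
      proof (cases "tl l2 = []")
        case True
        then have "l2 = [a]" using h2 by (metis list.collapse)
        then show ?thesis using h1 h2 True by simp
      next
        case False then show ?thesis using h2 by (simp add: last_tl)
      qed
      moreover have "set (tl l2) \<subseteq> E" using h2 by (metis list.set_sel(2) subset_code(1) subsetD)
      moreover have "a \<in> set l1" using h1 by (metis last_in_set)
      ultimately show "l1 @ tl l2 \<in> Paths E b z \<and> a \<in> set (l1 @ tl l2)"
        using h1 by (auto simp: Paths_def)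
    qed
    show "{l \<in> Paths E b z. a \<in> set l} \<subseteq> (\<lambda>(l1, l2). l1 @ tl l2) ` (Hs E b a \<times> Paths E a z)"
    proof
      fix l assume l: "l \<in> {l \<in> Paths E b z. a \<in> set l}"
      then have h: "l \<noteq> []" "hd l = b" "last l = z" "set l \<subseteq> E" "a \<in> set l" by (auto simp: Paths_def)
      obtain ys zs where yz: "l = ys @ a # zs" "a \<notin> set ys" using split_list_first[OF h(5)] by metis
      have "ys @ [a] \<in> Hs E b a"
        using h yz unfolding Hs_def Paths_def by (cases ys) auto
      moreover have "a # zs \<in> Paths E a z"
        using h yz unfolding Paths_def by (cases zs) auto
      ultimately show "l \<in> (\<lambda>(l1, l2). l1 @ tl l2) ` (Hs E b a \<times> Paths E a z)"
        using yz by (intro image_eqI[where x="(ys @ [a], a # zs)"]) auto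
    qed
  qed
qed

lemma sum_first_visit:
  "infsum pw {l \<in> Paths E b z. a \<in> set l} = H E b a * G E a z"
proof -
  have "infsum pw {l \<in> Paths E b z. a \<in> set l} = infsum (\<lambda>x. pw ((\<lambda>(l1, l2). l1 @ tl l2) x)) (Hs E b a \<times> Paths E a z)"
    by (rule ennreal_infsum_bij[OF split_first_visit, symmetric])
  also have "\<dots> = infsum (\<lambda>(l1, l2). pw l1 * pw l2) (Hs E b a \<times> Paths E a z)"
  proof (rule infsum_cong)
    fix x assume x: "x \<in> Hs E b a \<times> Paths E a z"
    obtain l1 l2 where xe: "x = (l1, l2)" by (cases x)
    have "l1 \<noteq> []" "last l1 = a" "l2 \<noteq> []" "hd l2 = a" using x xe by (auto simp: Hs_def Paths_def)
    then show "pw ((\<lambda>(l1, l2). l1 @ tl l2) x) = (\<lambda>(l1, l2). pw l1 * pw l2) x"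
      using xe pw_join by simp
  qed
  also have "\<dots> = H E b a * G E a z"
    unfolding H_def G_def by (rule ennreal_infsum_product)
  finally show ?thesis .
qed

lemma G_first: "G E b a = H E b a * G E a a"
proof -
  have "a \<in> set l" if "l \<in> Paths E b a" for l
    using that last_in_set[of l] by (auto simp: Paths_def)
  then have "{l \<in> Paths E b a. a \<in> set l} = Paths E b a" by blast
  then show ?thesis using sum_first_visit[of E b a a] by (simp add: G_def)
qed

lemma G_avoid: "G E b b = G (E - {a}) b b + H E b a * G E a b"
proof -
  have un: "Paths E b b = {l \<in> Paths E b b. a \<notin> set l} \<union> {l \<in> Paths E b b. a \<in> set l}" by auto
  have "G E b b = infsum pw {l \<in> Paths E b b. a \<notin> set l} + infsum pw {l \<in> Paths E b b. a \<in> set l}"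
    unfolding G_def by (subst un, rule infsum_Un_disjoint) auto
  moreover have "{l \<in> Paths E b b. a \<notin> set l} = Paths (E - {a}) b b" by (auto simp: Paths_def)
  ultimately show ?thesis using sum_first_visit[of E b b a] by (simp add: G_def)
qed

lemma H_le1: "H E b a \<le> 1"
  unfolding H_def
proof (rule pf_le1[of _ b])
  show "\<forall>l\<in>Hs E b a. l \<noteq> [] \<and> hd l = b" by (simp add: Hs_def Paths_def)
  show "\<forall>l\<in>Hs E b a. \<forall>l'\<in>Hs E b a. \<forall>r. l' = l @ r \<longrightarrow> r = []"
  proof (intro ballI allI impI)
    fix l l' r assume l: "l \<in> Hs E b a" and l': "l' \<in> Hs E b a" and e: "l' = l @ r"
    show "r = []"
    proof (rule ccontr)
      assume "r \<noteq> []"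
      then have "butlast l' = l @ butlast r" using e by (simp add: butlast_append)
      moreover have "l \<noteq> []" "last l = a" using l by (auto simp: Hs_def Paths_def)
      ultimately have "a \<in> set (butlast l')" by (metis Un_iff last_in_set set_append)
      then show False using l' by (simp add: Hs_def)
    qed
  qed
qed

lemma G_fin:
  assumes ED: "E \<subseteq> D" shows "G E a a < \<infinity>"
proof (cases "a \<in> E")
  case False then show ?thesis using G_notin by simp
next
  case True
  define T where "T = V - E"
  have ET: "E \<inter> T = {}" "E \<union> T = V" "W \<subseteq> T" using ED WV by (auto simp: T_def D_def)
  have aV: "a \<in> V" using True ED by (auto simp: D_def)
  define Bf where "Bf = {b. b \<noteq> [] \<and> last b \<in> T \<and> set (butlast b) \<subseteq> E - {a}}"
  have "1 = m E T a" using absorb[OF ET aV] by simp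
  also have "\<dots> = infsum (\<lambda>x. pw ((\<lambda>(l0, b). l0 @ b) x)) (Paths E a a \<times> Bf)"
    unfolding m_def Bf_def by (rule ennreal_infsum_bij[OF split_last_visit[OF ET(1) True], symmetric])
  also have "\<dots> = infsum (\<lambda>(l0, b). pw l0 * (ennreal (P a (hd b)) * pw b)) (Paths E a a \<times> Bf)"
  proof (rule infsum_cong)
    fix x assume x: "x \<in> Paths E a a \<times> Bf"
    obtain l0 b where xe: "x = (l0, b)" by (cases x)
    have "l0 \<noteq> []" "last l0 = a" "b \<noteq> []" using x xe by (auto simp: Paths_def Bf_def)
    then show "pw ((\<lambda>(l0, b). l0 @ b) x) = (\<lambda>(l0, b). pw l0 * (ennreal (P a (hd b)) * pw b)) x"
      using xe pw_append by (simp add: mult.assoc)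
  qed
  also have "\<dots> = G E a a * infsum (\<lambda>b. ennreal (P a (hd b)) * pw b) Bf"
    unfolding G_def by (rule ennreal_infsum_product)
  finally have e: "1 = G E a a * infsum (\<lambda>b. ennreal (P a (hd b)) * pw b) Bf" .
  show ?thesis
  proof (rule ccontr)
    assume na: "\<not> G E a a < \<infinity>"
    have "G E a a \<le> top" by simp
    then have "G E a a = \<infinity>" using na by (simp add: less_le)
    then show False using e by (cases "infsum (\<lambda>b. ennreal (P a (hd b)) * pw b) Bf = 0") (auto simp: ennreal_mult_top)
  qed
qed

lemma G_fin2:
  assumes ED: "E \<subseteq> D" shows "G E b a < \<infinity>"
proof -
  have "G E b a = H E b a * G E a a" by (rule G_first)
  also have "\<dots> \<le> 1 * G E a a" by (intro mult_right_mono H_le1) simp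
  also have "\<dots> < \<infinity>" using G_fin[OF ED] by simp
  finally show ?thesis .
qed

lemma G_swap:
  assumes ED: "E \<subseteq> D"
  shows "G E a a * G (E - {a}) b b = G E b b * G (E - {b}) a a"
proof (cases "a = b")
  case True then show ?thesis by simp
next
  case False
  show ?thesis
  proof (cases "a \<in> E \<and> b \<in> E")
    case False
    then show ?thesis using G_notin by (metis Diff_iff mult_zero_left mult_zero_right)
  next
    case True
    have 1: "G E a a * G E b b = G E a a * G (E - {a}) b b + G E b a * G E a b"
      using G_avoid[of E b a] G_first[of E b a] by (simp add: distrib_left mult_ac)
    have 2: "G E b b * G E a a = G E b b * G (E - {b}) a a + G E a b * G E b a"
      using G_avoid[of E a b] G_first[of E a b] by (simp add: distrib_left mult_ac)
    have f1: "G E b a \<noteq> \<infinity>" using G_fin2[OF ED, of b a] by (metis less_irrefl)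
    have f2: "G E a b \<noteq> \<infinity>" using G_fin2[OF ED, of a b] by (metis less_irrefl)
    have fin: "G E b a * G E a b \<noteq> \<infinity>"
      using f1 f2 by (simp add: ennreal_mult_eq_top_iff)
    have "G E b a * G E a b + G E a a * G (E - {a}) b b = G E b a * G E a b + G E b b * G (E - {b}) a a"
      using 1 2 by (simp add: mult_ac add_ac)
    then show ?thesis using fin by (simp add: ennreal_add_left_cancel)
  qed
qed

lemma FF_swap: "E \<subseteq> D \<Longrightarrow> FF E (a # b # s) = FF E (b # a # s)"
proof -
  assume ED: "E \<subseteq> D"
  have "E - {a} - {b} = E - {b} - {a}" by auto
  then show ?thesis using G_swap[OF ED, of a b] by (simp add: mult.assoc[symmetric])
qed

lemma FF_remove1: "E \<subseteq> D \<Longrightarrow> u \<in> set s \<Longrightarrow> FF E s = FF E (u # remove1 u s)"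
proof (induction s arbitrary: E)
  case Nil then show ?case by simp
next
  case (Cons x s)
  show ?case
  proof (cases "x = u")
    case True then show ?thesis by simp
  next
    case False
    then have us: "u \<in> set s" using Cons.prems by simp
    have sub: "E - {x} \<subseteq> D" using Cons.prems(1) by auto
    have "FF (E - {x}) s = FF (E - {x}) (u # remove1 u s)" by (rule Cons.IH[OF sub us])
    then have "FF E (x # s) = G E x x * FF (E - {x}) (u # remove1 u s)" by simp
    also have "\<dots> = FF E (x # u # remove1 u s)" by simp
    also have "\<dots> = FF E (u # x # remove1 u s)" by (rule FF_swap[OF Cons.prems(1)])
    finally show ?thesis using False by simp
  qed
qed

lemma FF_perm: "E \<subseteq> D \<Longrightarrow> mset s = mset s' \<Longrightarrow> FF E s = FF E s'"
proof (induction s' arbitrary: s E)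
  case Nil then show ?case by simp
next
  case (Cons u r)
  have us: "u \<in> set s" using Cons.prems(2) by (metis list.set_intros(1) set_mset_mset)
  have "FF E s = FF E (u # remove1 u s)" by (rule FF_remove1[OF Cons.prems(1) us])
  also have "\<dots> = G E u u * FF (E - {u}) (remove1 u s)" by simp
  also have "FF (E - {u}) (remove1 u s) = FF (E - {u}) r"
  proof (rule Cons.IH)
    show "E - {u} \<subseteq> D" using Cons.prems(1) by auto
    show "mset (remove1 u s) = mset r" using Cons.prems(2) by (simp add: mset_remove1)
  qed
  finally show ?case by simp
qed

lemma FF_append: "FF E (s @ t) = FF E s * FF (E - set s) t"
proof (induction s arbitrary: E)
  case Nil then show ?case by simp
next
  case (Cons v s)
  have "E - {v} - set s = E - set (v # s)" by auto
  then show ?case using Cons.IH[of "E - {v}"] by (simp add: mult.assoc)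
qed

end


lemma tw_dw0:
  "v \<notin> set p \<Longrightarrow> takeWhile (\<lambda>u. u \<noteq> v) (p @ v # r) = p \<and> dropWhile (\<lambda>u. u \<noteq> v) (p @ v # r) = v # r"
  by (induction p) auto

lemma tw_dw:
  assumes "v \<notin> set p"
  shows "takeWhile (\<lambda>u. u \<noteq> v) (p @ v # r) = p" "dropWhile (\<lambda>u. u \<noteq> v) (p @ v # r) = v # r"
  using tw_dw0[OF assms] by auto

lemma in_butlast_if: "x \<in> set l \<Longrightarrow> x \<noteq> last l \<Longrightarrow> x \<in> set (butlast l)"
  by (metis append_butlast_last_id butlast.simps(1) in_set_butlast_appendI list.set_cases rotate1.simps(2) set_ConsD set_rotate1)

lemma distinct_last_notin_butlast: "distinct l \<Longrightarrow> l \<noteq> [] \<Longrightarrow> last l \<notin> set (butlast l)"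
  by (metis append_butlast_last_id distinct_append disjoint_iff list.set_intros(1))

context rw begin

definition Gam :: "'a set \<Rightarrow> 'a set \<Rightarrow> 'a \<Rightarrow> 'a list set" where
  "Gam E T a = {\<gamma>. \<gamma> \<noteq> [] \<and> hd \<gamma> = a \<and> last \<gamma> \<in> T \<and> set (butlast \<gamma>) \<subseteq> E \<and> distinct \<gamma>}"

lemma LE_in_Gam:
  assumes "\<alpha> \<in> St E T a" shows "LE \<alpha> \<in> Gam E T a"
proof -
  have a: "\<alpha> \<noteq> []" "hd \<alpha> = a" "last \<alpha> \<in> T" "set (butlast \<alpha>) \<subseteq> E" using assms by (auto simp: St_def)
  have p: "LE \<alpha> \<noteq> []" "hd (LE \<alpha>) = a" "last (LE \<alpha>) = last \<alpha>" using LE_props[OF a(1)] a by auto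
  have "set (butlast (LE \<alpha>)) \<subseteq> E"
  proof
    fix x assume x: "x \<in> set (butlast (LE \<alpha>))"
    then have "x \<in> set \<alpha>" using LE_set[of \<alpha>] in_set_butlastD by fastforce
    moreover have "x \<noteq> last \<alpha>"
    proof
      assume "x = last \<alpha>"
      then have "last (LE \<alpha>) \<in> set (butlast (LE \<alpha>))" using x p(3) by simp
      then show False using distinct_last_notin_butlast[OF LE_distinct p(1)] by simp
    qed
    ultimately have "x \<in> set (butlast \<alpha>)" by (rule in_butlast_if)
    then show "x \<in> E" using a(4) by (rule subsetD[rotated])
  qed
  then show ?thesis using p a LE_distinct unfolding Gam_def by auto
qed

lemma group_LE:
  "infsum (\<lambda>\<alpha>. pw \<alpha> * f (LE \<alpha>)) (St E T a) = infsum (\<lambda>\<gamma>. f \<gamma> * Q E T \<gamma>) (Gam E T a)"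
proof -
  have bij: "bij_betw snd (Sigma (Gam E T a) (\<lambda>\<gamma>. {\<alpha> \<in> St E T (hd \<gamma>). LE \<alpha> = \<gamma>})) (St E T a)"
  proof (rule bij_betw_imageI)
    show "inj_on snd (Sigma (Gam E T a) (\<lambda>\<gamma>. {\<alpha> \<in> St E T (hd \<gamma>). LE \<alpha> = \<gamma>}))"
      by (rule inj_onI) auto
    show "snd ` Sigma (Gam E T a) (\<lambda>\<gamma>. {\<alpha> \<in> St E T (hd \<gamma>). LE \<alpha> = \<gamma>}) = St E T a"
    proof
      show "snd ` Sigma (Gam E T a) (\<lambda>\<gamma>. {\<alpha> \<in> St E T (hd \<gamma>). LE \<alpha> = \<gamma>}) \<subseteq> St E T a"
        by (auto simp: Gam_def)
      show "St E T a \<subseteq> snd ` Sigma (Gam E T a) (\<lambda>\<gamma>. {\<alpha> \<in> St E T (hd \<gamma>). LE \<alpha> = \<gamma>})"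
      proof
        fix \<alpha> assume a: "\<alpha> \<in> St E T a"
        have g: "LE \<alpha> \<in> Gam E T a" by (rule LE_in_Gam[OF a])
        then have "hd (LE \<alpha>) = a" by (simp add: Gam_def)
        then show "\<alpha> \<in> snd ` Sigma (Gam E T a) (\<lambda>\<gamma>. {\<alpha> \<in> St E T (hd \<gamma>). LE \<alpha> = \<gamma>})"
          using a g by (intro image_eqI[where x="(LE \<alpha>, \<alpha>)"]) auto
      qed
    qed
  qed
  have "infsum (\<lambda>\<alpha>. pw \<alpha> * f (LE \<alpha>)) (St E T a) =
        infsum (\<lambda>x. pw (snd x) * f (LE (snd x))) (Sigma (Gam E T a) (\<lambda>\<gamma>. {\<alpha> \<in> St E T (hd \<gamma>). LE \<alpha> = \<gamma>}))"
    by (rule ennreal_infsum_bij[OF bij, symmetric])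
  also have "\<dots> = infsum (\<lambda>\<gamma>. infsum (\<lambda>\<alpha>. pw \<alpha> * f (LE \<alpha>)) {\<alpha> \<in> St E T (hd \<gamma>). LE \<alpha> = \<gamma>}) (Gam E T a)"
    by (subst ennreal_infsum_Sigma) simp
  also have "\<dots> = infsum (\<lambda>\<gamma>. f \<gamma> * Q E T \<gamma>) (Gam E T a)"
  proof (rule infsum_cong)
    fix \<gamma> assume "\<gamma> \<in> Gam E T a"
    have "infsum (\<lambda>\<alpha>. pw \<alpha> * f (LE \<alpha>)) {\<alpha> \<in> St E T (hd \<gamma>). LE \<alpha> = \<gamma>} =
          infsum (\<lambda>\<alpha>. pw \<alpha> * f \<gamma>) {\<alpha> \<in> St E T (hd \<gamma>). LE \<alpha> = \<gamma>}"
      by (rule infsum_cong) simp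
    also have "\<dots> = Q E T \<gamma> * f \<gamma>" by (simp add: ennreal_infsum_cmult_right Q_def)
    finally show "infsum (\<lambda>\<alpha>. pw \<alpha> * f (LE \<alpha>)) {\<alpha> \<in> St E T (hd \<gamma>). LE \<alpha> = \<gamma>} = f \<gamma> * Q E T \<gamma>"
      by (simp add: mult.commute)
  qed
  finally show ?thesis .
qed

definition CC :: "'a \<Rightarrow> 'a \<Rightarrow> ('a list \<times> 'a list) set" where
  "CC a b = Sigma (Gam D W a) (\<lambda>\<gamma>. Gam (D - set \<gamma>) (W \<union> set \<gamma>) b)"

definition wt :: "'a list \<times> 'a list \<Rightarrow> ennreal" where
  "wt z = pw (fst z) * pw (snd z) * FF D (butlast (fst z) @ butlast (snd z))"

lemma DW: "D \<inter> W = {}" by (auto simp: D_def)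

lemma S1:
  "infsum (\<lambda>z. wt z * f z) (CC a b) =
   infsum (\<lambda>\<gamma>. Q D W \<gamma> * infsum (\<lambda>\<alpha>. pw \<alpha> * f (\<gamma>, LE \<alpha>)) (St (D - set \<gamma>) (W \<union> set \<gamma>) b)) (Gam D W a)"
proof -
  have "infsum (\<lambda>z. wt z * f z) (CC a b) =
        infsum (\<lambda>\<gamma>. infsum (\<lambda>\<eta>. wt (\<gamma>, \<eta>) * f (\<gamma>, \<eta>)) (Gam (D - set \<gamma>) (W \<union> set \<gamma>) b)) (Gam D W a)"
    unfolding CC_def by (rule ennreal_infsum_Sigma)
  also have "\<dots> = infsum (\<lambda>\<gamma>. Q D W \<gamma> * infsum (\<lambda>\<alpha>. pw \<alpha> * f (\<gamma>, LE \<alpha>)) (St (D - set \<gamma>) (W \<union> set \<gamma>) b)) (Gam D W a)"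
  proof (rule infsum_cong)
    fix \<gamma> assume g: "\<gamma> \<in> Gam D W a"
    then have g1: "\<gamma> \<noteq> []" "last \<gamma> \<in> W" by (auto simp: Gam_def)
    have Qg: "Q D W \<gamma> = pw \<gamma> * FF D (butlast \<gamma>)" by (rule Q_formula[OF DW g1])
    have dis: "(D - set \<gamma>) \<inter> (W \<union> set \<gamma>) = {}" using DW by auto
    have sg: "D - set (butlast \<gamma>) = D - set \<gamma>"
    proof -
      have "set \<gamma> = set (butlast \<gamma> @ [last \<gamma>])" using append_butlast_last_id[OF g1(1)] by simp
      then have "set \<gamma> = insert (last \<gamma>) (set (butlast \<gamma>))" by simp
      then show ?thesis using g1(2) DW by auto
    qed
    have "infsum (\<lambda>\<alpha>. pw \<alpha> * f (\<gamma>, LE \<alpha>)) (St (D - set \<gamma>) (W \<union> set \<gamma>) b) =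
          infsum (\<lambda>\<eta>. f (\<gamma>, \<eta>) * Q (D - set \<gamma>) (W \<union> set \<gamma>) \<eta>) (Gam (D - set \<gamma>) (W \<union> set \<gamma>) b)"
      by (rule group_LE)
    also have "\<dots> = infsum (\<lambda>\<eta>. f (\<gamma>, \<eta>) * (pw \<eta> * FF (D - set \<gamma>) (butlast \<eta>))) (Gam (D - set \<gamma>) (W \<union> set \<gamma>) b)"
    proof (rule infsum_cong)
      fix \<eta> assume "\<eta> \<in> Gam (D - set \<gamma>) (W \<union> set \<gamma>) b"
      then have "\<eta> \<noteq> []" "last \<eta> \<in> W \<union> set \<gamma>" by (auto simp: Gam_def)
      then show "f (\<gamma>, \<eta>) * Q (D - set \<gamma>) (W \<union> set \<gamma>) \<eta> = f (\<gamma>, \<eta>) * (pw \<eta> * FF (D - set \<gamma>) (butlast \<eta>))"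
        using Q_formula[OF dis] by simp
    qed
    finally have inner: "infsum (\<lambda>\<alpha>. pw \<alpha> * f (\<gamma>, LE \<alpha>)) (St (D - set \<gamma>) (W \<union> set \<gamma>) b) =
          infsum (\<lambda>\<eta>. f (\<gamma>, \<eta>) * (pw \<eta> * FF (D - set \<gamma>) (butlast \<eta>))) (Gam (D - set \<gamma>) (W \<union> set \<gamma>) b)" .
    have "infsum (\<lambda>\<eta>. wt (\<gamma>, \<eta>) * f (\<gamma>, \<eta>)) (Gam (D - set \<gamma>) (W \<union> set \<gamma>) b) =
          infsum (\<lambda>\<eta>. (pw \<gamma> * FF D (butlast \<gamma>)) * (f (\<gamma>, \<eta>) * (pw \<eta> * FF (D - set \<gamma>) (butlast \<eta>)))) (Gam (D - set \<gamma>) (W \<union> set \<gamma>) b)"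
      by (rule infsum_cong) (simp add: wt_def FF_append sg mult_ac)
    also have "\<dots> = (pw \<gamma> * FF D (butlast \<gamma>)) * infsum (\<lambda>\<eta>. f (\<gamma>, \<eta>) * (pw \<eta> * FF (D - set \<gamma>) (butlast \<eta>))) (Gam (D - set \<gamma>) (W \<union> set \<gamma>) b)"
      by (rule ennreal_infsum_cmult_left)
    finally show "infsum (\<lambda>\<eta>. wt (\<gamma>, \<eta>) * f (\<gamma>, \<eta>)) (Gam (D - set \<gamma>) (W \<union> set \<gamma>) b) =
          Q D W \<gamma> * infsum (\<lambda>\<alpha>. pw \<alpha> * f (\<gamma>, LE \<alpha>)) (St (D - set \<gamma>) (W \<union> set \<gamma>) b)"
      using inner Qg by simp
  qed
  finally show ?thesis .
qed


definition J :: "'a list \<times> 'a list \<Rightarrow> 'a list \<times> 'a list" where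
  "J z = (if last (snd z) \<in> set (fst z)
          then (snd z @ tl (dropWhile (\<lambda>u. u \<noteq> last (snd z)) (fst z)),
                takeWhile (\<lambda>u. u \<noteq> last (snd z)) (fst z) @ [last (snd z)])
          else (snd z, fst z))"

lemma J_case1:
  assumes "\<gamma> = p @ v # r" "v \<notin> set p" "last \<eta> = v"
  shows "J (\<gamma>, \<eta>) = (\<eta> @ r, p @ [v])"
  using assms tw_dw[OF assms(2), of r] by (simp add: J_def)

lemma J_case2: "last \<eta> \<notin> set \<gamma> \<Longrightarrow> J (\<gamma>, \<eta>) = (\<eta>, \<gamma>)"
  by (simp add: J_def)

lemma wt_perm:
  assumes "mset (butlast \<xi> @ butlast \<zeta>) = mset (butlast \<gamma> @ butlast \<eta>)"
    and "pw \<xi> * pw \<zeta> = pw \<gamma> * pw \<eta>"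
  shows "wt (\<xi>, \<zeta>) = wt (\<gamma>, \<eta>)"
proof -
  have "FF D (butlast \<xi> @ butlast \<zeta>) = FF D (butlast \<gamma> @ butlast \<eta>)"
    by (rule FF_perm[OF _ assms(1)]) simp
  then show ?thesis using assms(2) by (simp add: wt_def)
qed

lemma J_CC:
  assumes z: "z \<in> CC a b"
  shows "J z \<in> CC b a \<and> J (J z) = z \<and> wt (J z) = wt z \<and>
         (last (snd z) \<in> set (fst z) \<longrightarrow> last (fst (J z)) = last (fst z))"
proof -
  obtain \<gamma> \<eta> where ze: "z = (\<gamma>, \<eta>)" by (cases z)
  have g: "\<gamma> \<noteq> []" "hd \<gamma> = a" "last \<gamma> \<in> W" "set (butlast \<gamma>) \<subseteq> D" "distinct \<gamma>"
    using z ze by (auto simp: CC_def Gam_def)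
  have h: "\<eta> \<noteq> []" "hd \<eta> = b" "last \<eta> \<in> W \<union> set \<gamma>" "set (butlast \<eta>) \<subseteq> D - set \<gamma>" "distinct \<eta>"
    using z ze by (auto simp: CC_def Gam_def)
  define e where "e = butlast \<eta>"
  define v where "v = last \<eta>"
  have he: "\<eta> = e @ [v]" using h(1) by (simp add: e_def v_def)
  have ve: "v \<notin> set e" using h(5) he by simp
  have de: "distinct e" using h(5) he by simp
  have eg: "set e \<inter> set \<gamma> = {}" using h(4) by (auto simp: e_def)
  have eD: "set e \<subseteq> D" using h(4) by (auto simp: e_def)
  show ?thesis
  proof (cases "v \<in> set \<gamma>")
    case True
    obtain p r where pr: "\<gamma> = p @ v # r" "v \<notin> set p" using split_list_first[OF True] by metis
    have Jz: "J z = (\<eta> @ r, p @ [v])" using J_case1[OF pr] ze by (simp add: v_def)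
    have dg: "distinct p" "v \<notin> set r" "set p \<inter> set r = {}" "distinct r" using g(5) pr by auto
    have blg: "butlast \<gamma> = p @ butlast (v # r)" using pr by (simp add: butlast_append)
    have lg: "last \<gamma> = last (v # r)" using pr by simp
    have pD: "set p \<subseteq> D" using g(4) blg by auto
    have brD: "set (butlast (v # r)) \<subseteq> D" using g(4) blg by auto
    have xi: "\<eta> @ r = e @ v # r" using he by simp
    have blxi: "butlast (\<eta> @ r) = e @ butlast (v # r)" using xi by (simp add: butlast_append)
    have ev: "set e \<inter> set (v # r) = {}" using eg pr by auto
    have pxi: "set p \<inter> set (\<eta> @ r) = {}" using eg pr dg xi by auto
    have xiG: "\<eta> @ r \<in> Gam D W b"
      unfolding Gam_def
    proof (intro CollectI conjI)
      show "\<eta> @ r \<noteq> []" using h(1) by simp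
      show "hd (\<eta> @ r) = b" using h(1,2) by simp
      show "last (\<eta> @ r) \<in> W" using xi lg g(3) by (metis last_appendR list.distinct(1))
      show "set (butlast (\<eta> @ r)) \<subseteq> D" using blxi eD brD by simp
      show "distinct (\<eta> @ r)" using xi de ev dg(2) dg(4) by auto
    qed
    have zeG: "p @ [v] \<in> Gam (D - set (\<eta> @ r)) (W \<union> set (\<eta> @ r)) a"
      unfolding Gam_def
    proof (intro CollectI conjI)
      show "p @ [v] \<noteq> []" by simp
      show "hd (p @ [v]) = a" using g(2) pr by (cases p) auto
      show "last (p @ [v]) \<in> W \<union> set (\<eta> @ r)" using xi by simp
      show "set (butlast (p @ [v])) \<subseteq> D - set (\<eta> @ r)" using pD pxi by auto
      show "distinct (p @ [v])" using dg pr by simp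
    qed
    have inC: "J z \<in> CC b a" using Jz xiG zeG by (simp add: CC_def)
    have JJ: "J (J z) = z"
    proof -
      have "J (J z) = J (\<eta> @ r, p @ [v])" using Jz by simp
      also have "\<dots> = ((p @ [v]) @ r, e @ [v])"
        by (rule J_case1[OF xi ve]) simp
      also have "\<dots> = (\<gamma>, \<eta>)" using pr he by simp
      finally show ?thesis using ze by simp
    qed
    have lv: "last \<eta> = hd (v # r)" by (simp add: v_def)
    have "pw (\<eta> @ tl (v # r)) = pw \<eta> * pw (v # r)"
      by (rule pw_join[OF h(1) _ lv]) simp
    then have pw1: "pw (\<eta> @ r) = pw \<eta> * pw (v # r)" by simp
    have "pw ((p @ [v]) @ tl (v # r)) = pw (p @ [v]) * pw (v # r)"
      by (rule pw_join) simp_all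
    then have pw2: "pw \<gamma> = pw (p @ [v]) * pw (v # r)" using pr by simp
    have "wt (\<eta> @ r, p @ [v]) = wt (\<gamma>, \<eta>)"
    proof (rule wt_perm)
      show "mset (butlast (\<eta> @ r) @ butlast (p @ [v])) = mset (butlast \<gamma> @ butlast \<eta>)"
        using blxi blg by (simp add: e_def)
      show "pw (\<eta> @ r) * pw (p @ [v]) = pw \<gamma> * pw \<eta>"
        using pw1 pw2 by (simp add: mult_ac)
    qed
    then have wtJ: "wt (J z) = wt z" using Jz ze by simp
    have "last (fst (J z)) = last (fst z)" using Jz ze xi lg by simp
    then show ?thesis using inC JJ wtJ by simp
  next
    case False
    have Jz: "J z = (\<eta>, \<gamma>)" using J_case2[of \<eta> \<gamma>] False ze by (simp add: v_def)
    have vW: "v \<in> W" using h(3) False by (simp add: v_def)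
    have dis: "set \<eta> \<inter> set \<gamma> = {}" using eg False he by auto
    have etaG: "\<eta> \<in> Gam D W b"
      using h vW eD unfolding Gam_def by (auto simp: v_def e_def)
    have gG: "\<gamma> \<in> Gam (D - set \<eta>) (W \<union> set \<eta>) a"
    proof -
      have "set (butlast \<gamma>) \<subseteq> set \<gamma>" by (rule subsetI) (rule in_set_butlastD)
      then have "set (butlast \<gamma>) \<subseteq> D - set \<eta>" using g(4) dis by auto
      then show ?thesis using g unfolding Gam_def by auto
    qed
    have inC: "J z \<in> CC b a" using Jz etaG gG by (simp add: CC_def)
    have "last \<gamma> \<notin> set \<eta>" using dis g(1) last_in_set by blast
    then have JJ: "J (J z) = z" using Jz ze J_case2 by simp
    have "wt (\<eta>, \<gamma>) = wt (\<gamma>, \<eta>)" by (rule wt_perm) (simp_all add: mult.commute)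
    then have wtJ: "wt (J z) = wt z" using Jz ze by simp
    show ?thesis using inC JJ wtJ False ze by (simp add: v_def)
  qed
qed

lemma J_bij: "bij_betw J (CC a b) (CC b a)"
proof (rule bij_betw_byWitness[where f'=J])
  show "\<forall>z\<in>CC a b. J (J z) = z" using J_CC by blast
  show "\<forall>z\<in>CC b a. J (J z) = z" using J_CC by blast
  show "J ` CC a b \<subseteq> CC b a" using J_CC by blast
  show "J ` CC b a \<subseteq> CC a b" using J_CC by blast
qed

end


definition ind :: "bool \<Rightarrow> ennreal" where "ind b = (if b then 1 else 0)"

context rw begin

definition Hh :: "'a \<Rightarrow> 'a set \<Rightarrow> ennreal" where
  "Hh a A = infsum (\<lambda>\<beta>. pw \<beta> * ind (last \<beta> \<in> A)) (St D W a)"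

definition NN :: "'a \<Rightarrow> 'a \<Rightarrow> ennreal" where
  "NN x y = infsum pw {\<alpha> \<in> St D W x. \<not> disconnects c (set \<alpha>) y W}"

lemma Gam_set_V: "\<gamma> \<in> Gam D W a \<Longrightarrow> set \<gamma> \<subseteq> V"
proof -
  assume g: "\<gamma> \<in> Gam D W a"
  then have g1: "\<gamma> \<noteq> []" "last \<gamma> \<in> W" "set (butlast \<gamma>) \<subseteq> D" by (auto simp: Gam_def)
  have "set \<gamma> = set (butlast \<gamma> @ [last \<gamma>])" using append_butlast_last_id[OF g1(1)] by simp
  then have "set \<gamma> = insert (last \<gamma>) (set (butlast \<gamma>))" by simp
  then show ?thesis using g1 WV by (auto simp: D_def)
qed

lemma absorb_gam:
  assumes "\<gamma> \<in> Gam D W a" "b \<in> V"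
  shows "m (D - set \<gamma>) (W \<union> set \<gamma>) b = 1"
proof (rule absorb)
  show "(D - set \<gamma>) \<inter> (W \<union> set \<gamma>) = {}" using DW by auto
  show "D - set \<gamma> \<union> (W \<union> set \<gamma>) = V" using Gam_set_V[OF assms(1)] WV by (auto simp: D_def)
  show "W \<subseteq> W \<union> set \<gamma>" by auto
  show "b \<in> V" by fact
qed

lemma m_DW: "a \<in> V \<Longrightarrow> m D W a = 1"
  by (rule absorb) (use DW WV in \<open>auto simp: D_def\<close>)

lemma claim1:
  assumes "b \<in> V"
  shows "Hh a A = infsum (\<lambda>z. wt z * ind (last (fst z) \<in> A)) (CC a b)"
proof -
  have "infsum (\<lambda>z. wt z * ind (last (fst z) \<in> A)) (CC a b) =
        infsum (\<lambda>\<gamma>. Q D W \<gamma> * infsum (\<lambda>\<alpha>. pw \<alpha> * ind (last (fst (\<gamma>, LE \<alpha>)) \<in> A)) (St (D - set \<gamma>) (W \<union> set \<gamma>) b)) (Gam D W a)"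
    by (rule S1)
  also have "\<dots> = infsum (\<lambda>\<gamma>. ind (last \<gamma> \<in> A) * Q D W \<gamma>) (Gam D W a)"
  proof (rule infsum_cong)
    fix \<gamma> assume g: "\<gamma> \<in> Gam D W a"
    have "infsum (\<lambda>\<alpha>. pw \<alpha> * ind (last (fst (\<gamma>, LE \<alpha>)) \<in> A)) (St (D - set \<gamma>) (W \<union> set \<gamma>) b) =
          infsum (\<lambda>\<alpha>. pw \<alpha> * ind (last \<gamma> \<in> A)) (St (D - set \<gamma>) (W \<union> set \<gamma>) b)"
      by simp
    also have "\<dots> = m (D - set \<gamma>) (W \<union> set \<gamma>) b * ind (last \<gamma> \<in> A)"
      unfolding m_def by (rule ennreal_infsum_cmult_right)
    also have "\<dots> = ind (last \<gamma> \<in> A)" using absorb_gam[OF g assms] by simp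
    finally show "Q D W \<gamma> * infsum (\<lambda>\<alpha>. pw \<alpha> * ind (last (fst (\<gamma>, LE \<alpha>)) \<in> A)) (St (D - set \<gamma>) (W \<union> set \<gamma>) b) =
          ind (last \<gamma> \<in> A) * Q D W \<gamma>" by (simp add: mult.commute)
  qed
  also have "\<dots> = infsum (\<lambda>\<beta>. pw \<beta> * ind (last (LE \<beta>) \<in> A)) (St D W a)"
    by (rule group_LE[symmetric])
  also have "\<dots> = Hh a A"
    unfolding Hh_def
  proof (rule infsum_cong)
    fix \<beta> assume "\<beta> \<in> St D W a"
    then have "\<beta> \<noteq> []" by (simp add: St_def)
    then show "pw \<beta> * ind (last (LE \<beta>) \<in> A) = pw \<beta> * ind (last \<beta> \<in> A)" using LE_props[OF \<open>\<beta> \<noteq> []\<close>] by simp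
  qed
  finally show ?thesis by simp
qed

lemma sumQ: "a \<in> V \<Longrightarrow> infsum (Q D W) (Gam D W a) = 1"
proof -
  assume a: "a \<in> V"
  have "infsum (\<lambda>\<beta>. pw \<beta> * (\<lambda>\<gamma>. 1) (LE \<beta>)) (St D W a) = infsum (\<lambda>\<gamma>. (\<lambda>\<gamma>. 1) \<gamma> * Q D W \<gamma>) (Gam D W a)"
    by (rule group_LE)
  then show ?thesis using m_DW[OF a] by (simp add: m_def)
qed

lemma claim3:
  assumes "x \<in> V" "y \<in> V"
  shows "infsum (\<lambda>z. wt z * ind (last (snd z) \<notin> set (fst z))) (CC y x) \<le> NN x y"
proof -
  have "infsum (\<lambda>z. wt z * ind (last (snd z) \<notin> set (fst z))) (CC y x) =
        infsum (\<lambda>\<gamma>. Q D W \<gamma> * infsum (\<lambda>\<alpha>. pw \<alpha> * ind (last (snd (\<gamma>, LE \<alpha>)) \<notin> set (fst (\<gamma>, LE \<alpha>)))) (St (D - set \<gamma>) (W \<union> set \<gamma>) x)) (Gam D W y)"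
    by (rule S1)
  also have "\<dots> \<le> infsum (\<lambda>\<gamma>. Q D W \<gamma> * NN x y) (Gam D W y)"
  proof (rule ennreal_infsum_mono)
    fix \<gamma> assume g: "\<gamma> \<in> Gam D W y"
    show "Q D W \<gamma> * infsum (\<lambda>\<alpha>. pw \<alpha> * ind (last (snd (\<gamma>, LE \<alpha>)) \<notin> set (fst (\<gamma>, LE \<alpha>)))) (St (D - set \<gamma>) (W \<union> set \<gamma>) x)
          \<le> Q D W \<gamma> * NN x y"
    proof (cases "Q D W \<gamma> = 0")
      case True then show ?thesis by simp
    next
      case False
      have g1: "\<gamma> \<noteq> []" "hd \<gamma> = y" "last \<gamma> \<in> W" using g by (auto simp: Gam_def)
      have "Q D W \<gamma> = pw \<gamma> * FF D (butlast \<gamma>)" by (rule Q_formula[OF DW g1(1) g1(3)])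
      then have "pw \<gamma> \<noteq> 0" using False by auto
      then have gp: "graph_path c \<gamma>" using pw_pos_path g1(1) by simp
      have "infsum (\<lambda>\<alpha>. pw \<alpha> * ind (last (snd (\<gamma>, LE \<alpha>)) \<notin> set (fst (\<gamma>, LE \<alpha>)))) (St (D - set \<gamma>) (W \<union> set \<gamma>) x)
            = infsum pw {\<alpha> \<in> St (D - set \<gamma>) (W \<union> set \<gamma>) x. last \<alpha> \<notin> set \<gamma>}"
      proof (rule infsum_cong_neutral)
        fix \<alpha> assume "\<alpha> \<in> St (D - set \<gamma>) (W \<union> set \<gamma>) x - {\<alpha> \<in> St (D - set \<gamma>) (W \<union> set \<gamma>) x. last \<alpha> \<notin> set \<gamma>}"
        then have an: "\<alpha> \<noteq> []" "last \<alpha> \<in> set \<gamma>" by (auto simp: St_def)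
        then show "pw \<alpha> * ind (last (snd (\<gamma>, LE \<alpha>)) \<notin> set (fst (\<gamma>, LE \<alpha>))) = 0"
          using LE_props[OF an(1)] by (simp add: ind_def)
      next
        fix \<alpha> assume "\<alpha> \<in> St (D - set \<gamma>) (W \<union> set \<gamma>) x \<inter> {\<alpha> \<in> St (D - set \<gamma>) (W \<union> set \<gamma>) x. last \<alpha> \<notin> set \<gamma>}"
        then have an: "\<alpha> \<noteq> []" "last \<alpha> \<notin> set \<gamma>" by (auto simp: St_def)
        then show "pw \<alpha> * ind (last (snd (\<gamma>, LE \<alpha>)) \<notin> set (fst (\<gamma>, LE \<alpha>))) = pw \<alpha>"
          using LE_props[OF an(1)] by (simp add: ind_def)
      qed blast
      also have "\<dots> \<le> NN x y"
        unfolding NN_def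
      proof (rule ennreal_infsum_mono_set, rule subsetI)
        fix \<alpha> assume "\<alpha> \<in> {\<alpha> \<in> St (D - set \<gamma>) (W \<union> set \<gamma>) x. last \<alpha> \<notin> set \<gamma>}"
        then have a: "\<alpha> \<noteq> []" "hd \<alpha> = x" "last \<alpha> \<in> W \<union> set \<gamma>" "set (butlast \<alpha>) \<subseteq> D - set \<gamma>" "last \<alpha> \<notin> set \<gamma>"
          by (auto simp: St_def)
        have sa: "set \<alpha> = insert (last \<alpha>) (set (butlast \<alpha>))"
        proof -
          have "set \<alpha> = set (butlast \<alpha> @ [last \<alpha>])" using append_butlast_last_id[OF a(1)] by simp
          then show ?thesis by simp
        qed
        have dis: "set \<gamma> \<inter> set \<alpha> = {}" using sa a(4) a(5) by auto
        have "\<not> disconnects c (set \<alpha>) y W"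
          unfolding disconnects_def using gp g1 dis by blast
        moreover have "\<alpha> \<in> St D W x" using a unfolding St_def by auto
        ultimately show "\<alpha> \<in> {\<alpha> \<in> St D W x. \<not> disconnects c (set \<alpha>) y W}" by simp
      qed
      finally show ?thesis by (rule mult_left_mono) simp
    qed
  qed
  also have "\<dots> = NN x y * infsum (Q D W) (Gam D W y)"
    using ennreal_infsum_cmult_left[of "NN x y" "Q D W" "Gam D W y"] by (simp add: mult.commute)
  also have "\<dots> = NN x y" using sumQ[OF assms(2)] by simp
  finally show ?thesis .
qed

lemma main_ineq:
  assumes "x \<in> V" "y \<in> V"
  shows "Hh x A \<le> Hh y A + NN x y"
proof -
  have "Hh x A = infsum (\<lambda>z. wt z * ind (last (fst z) \<in> A)) (CC x y)" by (rule claim1[OF assms(2)])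
  also have "\<dots> = infsum (\<lambda>z. wt (J z) * ind (last (fst (J z)) \<in> A)) (CC y x)"
    by (rule ennreal_infsum_bij[OF J_bij, symmetric])
  also have "\<dots> = infsum (\<lambda>z. wt z * ind (last (fst (J z)) \<in> A)) (CC y x)"
    by (rule infsum_cong) (simp add: J_CC)
  also have "\<dots> \<le> infsum (\<lambda>z. wt z * ind (last (fst z) \<in> A) + wt z * ind (last (snd z) \<notin> set (fst z))) (CC y x)"
  proof (rule ennreal_infsum_mono)
    fix z assume z: "z \<in> CC y x"
    show "wt z * ind (last (fst (J z)) \<in> A) \<le> wt z * ind (last (fst z) \<in> A) + wt z * ind (last (snd z) \<notin> set (fst z))"
    proof (cases "last (snd z) \<in> set (fst z)")
      case True then show ?thesis using J_CC[OF z] by simp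
    next
      case False then show ?thesis by (simp add: ind_def)
    qed
  qed
  also have "\<dots> = Hh y A + infsum (\<lambda>z. wt z * ind (last (snd z) \<notin> set (fst z))) (CC y x)"
    by (simp add: ennreal_infsum_add claim1[OF assms(1)])
  also have "\<dots> \<le> Hh y A + NN x y" using claim3[OF assms] by (rule add_left_mono)
  finally show ?thesis .
qed

lemma main_ineq2:
  assumes "x \<in> V" "y \<in> V"
  shows "Hh y A \<le> Hh x A + NN x y"
proof -
  have "Hh y A = infsum (\<lambda>z. wt z * ind (last (fst z) \<in> A)) (CC y x)" by (rule claim1[OF assms(1)])
  also have "\<dots> \<le> infsum (\<lambda>z. wt z * ind (last (fst (J z)) \<in> A) + wt z * ind (last (snd z) \<notin> set (fst z))) (CC y x)"
  proof (rule ennreal_infsum_mono)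
    fix z assume z: "z \<in> CC y x"
    show "wt z * ind (last (fst z) \<in> A) \<le> wt z * ind (last (fst (J z)) \<in> A) + wt z * ind (last (snd z) \<notin> set (fst z))"
    proof (cases "last (snd z) \<in> set (fst z)")
      case True then show ?thesis using J_CC[OF z] by simp
    next
      case False then show ?thesis by (simp add: ind_def)
    qed
  qed
  also have "\<dots> = infsum (\<lambda>z. wt z * ind (last (fst (J z)) \<in> A)) (CC y x) + infsum (\<lambda>z. wt z * ind (last (snd z) \<notin> set (fst z))) (CC y x)"
    by (rule ennreal_infsum_add)
  also have "infsum (\<lambda>z. wt z * ind (last (fst (J z)) \<in> A)) (CC y x) = infsum (\<lambda>z. wt (J z) * ind (last (fst (J z)) \<in> A)) (CC y x)"
    by (rule infsum_cong) (simp add: J_CC)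
  also have "\<dots> = infsum (\<lambda>z. wt z * ind (last (fst z) \<in> A)) (CC x y)"
    by (rule ennreal_infsum_bij[OF J_bij])
  also have "\<dots> = Hh x A" by (rule claim1[OF assms(2), symmetric])
  also have "Hh x A + infsum (\<lambda>z. wt z * ind (last (snd z) \<notin> set (fst z))) (CC y x) \<le> Hh x A + NN x y"
    using claim3[OF assms] by (rule add_left_mono)
  finally show ?thesis .
qed

end


context rw begin

lemma St_stopped:
  "infsum (\<lambda>p. ennreal (traj_prob V c p)) {p \<in> stopped_trajs W x. R p} = infsum pw {p \<in> St D W x. R p}"
proof (rule infsum_cong_neutral)
  fix p assume p: "p \<in> {p \<in> St D W x. R p} - {p \<in> stopped_trajs W x. R p}"
  then have a: "p \<noteq> []" "hd p = x" "last p \<in> W" "set (butlast p) \<subseteq> D" "R p" by (auto simp: St_def)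
  have "\<forall>i. Suc i < length p \<longrightarrow> p ! i \<notin> W"
  proof (intro allI impI)
    fix i assume "Suc i < length p"
    then have il: "i < length (butlast p)" by simp
    then have "butlast p ! i \<in> set (butlast p)" by (rule nth_mem)
    then have "p ! i \<in> set (butlast p)" using nth_butlast[OF il] by simp
    then show "p ! i \<notin> W" using a(4) by (auto simp: D_def)
  qed
  then have "p \<in> {p \<in> stopped_trajs W x. R p}" using a by (simp add: stopped_trajs_def)
  then show "pw p = 0" using p by simp
next
  fix p assume p: "p \<in> {p \<in> stopped_trajs W x. R p} - {p \<in> St D W x. R p}"
  then have a: "p \<noteq> []" "hd p = x" "last p \<in> W" "\<forall>i. Suc i < length p \<longrightarrow> p ! i \<notin> W" "R p"
    by (auto simp: stopped_trajs_def)
  have "\<not> set (butlast p) \<subseteq> D" using p a by (auto simp: St_def)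
  then obtain u where u: "u \<in> set (butlast p)" "u \<notin> D" by auto
  then obtain i where i: "i < length (butlast p)" "butlast p ! i = u" by (auto simp: in_set_conv_nth)
  have i2: "i < length p - 1" "p ! i = u" using i by (auto simp: nth_butlast)
  have "Suc i < length p" using i2(1) by linarith
  then have "u \<notin> W" using a(4) i2(2) by auto
  then have "u \<notin> V" using u(2) by (auto simp: D_def)
  then have "pw p = 0" using pw_zero_outside[of i p] i2 by simp
  then show "ennreal (traj_prob V c p) = 0" by (simp add: pw_def)
qed (simp add: pw_def)

lemma Hh_le1: "Hh a A \<le> 1"
proof -
  have "Hh a A \<le> infsum pw (St D W a)"
    unfolding Hh_def by (rule ennreal_infsum_mono) (simp add: ind_def mult_left_le)
  also have "\<dots> \<le> 1" using m_le1[OF DW] by (simp add: m_def)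
  finally show ?thesis .
qed

lemma NN_le1: "NN a b \<le> 1"
proof -
  have "NN a b \<le> infsum pw (St D W a)"
    unfolding NN_def by (rule ennreal_infsum_mono_set) auto
  also have "\<dots> \<le> 1" using m_le1[OF DW] by (simp add: m_def)
  finally show ?thesis .
qed

lemma hit_ennreal: "ennreal (hit_law V c W x A) = Hh x A"
proof -
  have e1: "infsum (\<lambda>p. ennreal (traj_prob V c p)) {p \<in> stopped_trajs W x. last p \<in> A} = Hh x A"
    unfolding St_stopped Hh_def
  proof (rule infsum_cong_neutral)
    fix p assume "p \<in> St D W x - {p \<in> St D W x. last p \<in> A}"
    then show "pw p * ind (last p \<in> A) = 0" by (simp add: ind_def)
  qed (auto simp: ind_def)
  have "ennreal (hit_law V c W x A) = infsum (\<lambda>p. ennreal (traj_prob V c p)) {p \<in> stopped_trajs W x. last p \<in> A}"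
    unfolding hit_law_def
  proof (rule real_infsum_ennreal)
    show "\<And>p. p \<in> {p \<in> stopped_trajs W x. last p \<in> A} \<Longrightarrow> 0 \<le> traj_prob V c p" by (simp add: traj_prob_nonneg)
    show "infsum (\<lambda>p. ennreal (traj_prob V c p)) {p \<in> stopped_trajs W x. last p \<in> A} < \<infinity>"
      using e1 Hh_le1[of x A] by (simp add: le_less_trans)
  qed
  then show ?thesis using e1 by simp
qed

lemma pnd_ennreal: "ennreal (prob_not_disconnect V c W x y) = NN x y"
proof -
  have e1: "infsum (\<lambda>p. ennreal (traj_prob V c p)) {p \<in> stopped_trajs W x. \<not> disconnects c (set p) y W} = NN x y"
    unfolding St_stopped NN_def by simp
  have "ennreal (prob_not_disconnect V c W x y) = infsum (\<lambda>p. ennreal (traj_prob V c p)) {p \<in> stopped_trajs W x. \<not> disconnects c (set p) y W}"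
    unfolding prob_not_disconnect_def
  proof (rule real_infsum_ennreal)
    show "\<And>p. p \<in> {p \<in> stopped_trajs W x. \<not> disconnects c (set p) y W} \<Longrightarrow> 0 \<le> traj_prob V c p" by (simp add: traj_prob_nonneg)
    show "infsum (\<lambda>p. ennreal (traj_prob V c p)) {p \<in> stopped_trajs W x. \<not> disconnects c (set p) y W} < \<infinity>"
      using e1 NN_le1[of x y] by (simp add: le_less_trans)
  qed
  then show ?thesis using e1 by simp
qed

lemma real_ineq:
  assumes "x \<in> V" "y \<in> V"
  shows "\<bar>hit_law V c W x A - hit_law V c W y A\<bar> \<le> prob_not_disconnect V c W x y"
proof -
  have nn1: "0 \<le> hit_law V c W x A" "0 \<le> hit_law V c W y A" "0 \<le> prob_not_disconnect V c W x y"
    unfolding hit_law_def prob_not_disconnect_def by (auto intro!: infsum_nonneg simp: traj_prob_nonneg)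
  have "ennreal (hit_law V c W x A) \<le> ennreal (hit_law V c W y A) + ennreal (prob_not_disconnect V c W x y)"
    using main_ineq[OF assms, of A] by (simp add: hit_ennreal pnd_ennreal)
  then have 1: "hit_law V c W x A \<le> hit_law V c W y A + prob_not_disconnect V c W x y"
    using nn1 by (simp add: ennreal_plus[symmetric] ennreal_le_iff del: ennreal_plus)
  have "ennreal (hit_law V c W y A) \<le> ennreal (hit_law V c W x A) + ennreal (prob_not_disconnect V c W x y)"
    using main_ineq2[OF assms, of A] by (simp add: hit_ennreal pnd_ennreal)
  then have 2: "hit_law V c W y A \<le> hit_law V c W x A + prob_not_disconnect V c W x y"
    using nn1 by (simp add: ennreal_plus[symmetric] ennreal_le_iff del: ennreal_plus)
  show ?thesis using 1 2 by linarith
qed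

end

theorem mainTheorem4:
  fixes V W :: "'a set" and c :: "'a \<Rightarrow> 'a \<Rightarrow> real" and x y :: 'a
  assumes "weighted_graph V c" and "connected_graph V c" and "planar_graph V c"
    and "W \<subseteq> V" and "W \<noteq> {}"
    and "x \<in> V - W" and "y \<in> V - W"
  shows "dTV_hit V c W x y \<le> prob_not_disconnect V c W x y"
proof -
  interpret rw V c W using assms by unfold_locales auto
  have xy: "x \<in> V" "y \<in> V" using assms by auto
  show ?thesis
    unfolding dTV_hit_def
  proof (rule cSUP_least)
    show "Pow V \<noteq> {}" using Pow_bottom[of V] by blast
    fix A assume "A \<in> Pow V"
    show "\<bar>hit_law V c W x A - hit_law V c W y A\<bar> \<le> prob_not_disconnect V c W x y"
      by (rule real_ineq[OF xy])
  qed
qed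


end
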